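(* Let $S$ be a Boolean inverse monoid satisfying condition (H), and let $\nu\in IM(\mathcal G_{\mathrm{tight}}(S))$. Then $\eta_\nu:E(S)\to[0,\infty)$, $\eta_\nu(e)=\nu(D_e)$, is a normalized invariant mean on $S$, and $\nu\mapsto\eta_\nu$ is an affine isomorphism (bijection) from $IM(\mathcal G_{\mathrm{tight}}(S))$ onto $M(S)$.
   Context: $S$ is a Boolean inverse monoid (countable inverse monoid with zero, $s^*$ the inverse of $s$, in which finite compatible sets have joins, multiplication distributes over them, and the idempotents $E(S)$ form a Boolean algebra). $\mathcal J_s=\{e\in E(S):se=e\}$; condition (H): each $\mathcal J_s$ admits a finite cover (finite $C\subseteq\mathcal J_s$ such that every nonzero element of $\mathcal J_s$ has nonzero product with some $c\in C$). $M(S)$: normalized invariant means, i.e. $\mu:E(S)\to[0,\infty)$ with $\mu(1)=1$, $\mu(s^*s)=\mu(ss^* )$, and $\mu(e\vee f)=\mu(e)+\mu(f)$ when $ef=0$. $\widehat E_{\mathrm{tight}}(S)$ is the Stone space of ultrafilters of $E(S)$, $D_e=\{\xi: e\in\xi\}$ (clopen), $\theta_s:D_{s^*s}\to D_{ss^*}$, $\theta_s(\xi)=\{f: f\ge ses^*\text{ for some }e\in\xi\}$. $\mathcal G_{\mathrm{tight}}(S)$ is the groupoid of germs $[s,\xi]$ ($[s,\xi]=[t,\xi]$ iff $se=te$ for some $e\in\xi$), $d([s,\xi])=\xi$, $r([s,\xi])=\theta_s(\xi)$, with topology generated by $\Theta(s,U)=\{[s,\xi]:\xi\in U\}$, $U\subseteq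 D_{s^*s}$ open; its unit space is $\widehat E_{\mathrm{tight}}(S)$. For an étale groupoid $\mathcal G$, a bisection is an open set $U$ on which $r$ and $d$ are injective; $IM(\mathcal G)$ is the affine space of regular Borel probability measures $\nu$ on $\mathcal G^{(0)}$ with $\nu(r(U))=\nu(d(U))$ for all bisections $U$. *)

theory Defs
  imports "HOL-Probability.Probability"
begin

text \<open>The monoid is the whole (countable) type 'a, with multiplication m, inverse st (s*),
identity one and zero z.\<close>

definition idem :: "('a \<Rightarrow> 'a \<Rightarrow> 'a) \<Rightarrow> 'a set" where
  "idem m = {e. m e e = e}"

definition inverse_monoid_zero ::
  "('a \<Rightarrow> 'a \<Rightarrow> 'a) \<Rightarrow> ('a \<Rightarrow> 'a) \<Rightarrow> 'a \<Rightarrow> 'a \<Rightarrow> bool" where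
  "inverse_monoid_zero m st one z \<longleftrightarrow>
     (\<forall>a b c. m (m a b) c = m a (m b c)) \<and>
     (\<forall>a. m one a = a \<and> m a one = a) \<and>
     (\<forall>a. m z a = z \<and> m a z = z) \<and>
     (\<forall>s. m s (m (st s) s) = s \<and> m (st s) (m s (st s)) = st s) \<and>
     (\<forall>e\<in>idem m. \<forall>f\<in>idem m. m e f = m f e)"

definition nat_le :: "('a \<Rightarrow> 'a \<Rightarrow> 'a) \<Rightarrow> ('a \<Rightarrow> 'a) \<Rightarrow> 'a \<Rightarrow> 'a \<Rightarrow> bool" where
  "nat_le m st s t \<longleftrightarrow> s = m t (m (st s) s)"

definition compatible_set :: "('a \<Rightarrow> 'a \<Rightarrow> 'a) \<Rightarrow> ('a \<Rightarrow> 'a) \<Rightarrow> 'a set \<Rightarrow> bool" where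
  "compatible_set m st A \<longleftrightarrow>
     (\<forall>s\<in>A. \<forall>t\<in>A. m (st s) t \<in> idem m \<and> m s (st t) \<in> idem m)"

definition is_join :: "('a \<Rightarrow> 'a \<Rightarrow> 'a) \<Rightarrow> ('a \<Rightarrow> 'a) \<Rightarrow> 'a set \<Rightarrow> 'a \<Rightarrow> bool" where
  "is_join m st A j \<longleftrightarrow> (\<forall>a\<in>A. nat_le m st a j) \<and>
     (\<forall>u. (\<forall>a\<in>A. nat_le m st a u) \<longrightarrow> nat_le m st j u)"

definition join :: "('a \<Rightarrow> 'a \<Rightarrow> 'a) \<Rightarrow> ('a \<Rightarrow> 'a) \<Rightarrow> 'a set \<Rightarrow> 'a" where
  "join m st A = (THE j. is_join m st A j)"

definition idem_boolean_algebra ::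
  "('a \<Rightarrow> 'a \<Rightarrow> 'a) \<Rightarrow> ('a \<Rightarrow> 'a) \<Rightarrow> 'a \<Rightarrow> 'a \<Rightarrow> bool" where
  "idem_boolean_algebra m st one z \<longleftrightarrow>
     (\<forall>e\<in>idem m. \<forall>f\<in>idem m. \<exists>j\<in>idem m. is_join m st {e, f} j) \<and>
     (\<forall>e\<in>idem m. \<forall>f\<in>idem m. \<forall>g\<in>idem m.
        m e (join m st {f, g}) = join m st {m e f, m e g}) \<and>
     (\<forall>e\<in>idem m. \<exists>f\<in>idem m. m e f = z \<and> is_join m st {e, f} one)"

definition boolean_inverse_monoid ::
  "('a \<Rightarrow> 'a \<Rightarrow> 'a) \<Rightarrow> ('a \<Rightarrow> 'a) \<Rightarrow> 'a \<Rightarrow> 'a \<Rightarrow> bool" where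
  "boolean_inverse_monoid m st one z \<longleftrightarrow>
     inverse_monoid_zero m st one z \<and>
     (\<forall>A. finite A \<and> compatible_set m st A \<longrightarrow> (\<exists>j. is_join m st A j)) \<and>
     (\<forall>A s. finite A \<and> compatible_set m st A \<longrightarrow>
        m s (join m st A) = join m st ((\<lambda>a. m s a) ` A) \<and>
        m (join m st A) s = join m st ((\<lambda>a. m a s) ` A)) \<and>
     idem_boolean_algebra m st one z"

definition J_set :: "('a \<Rightarrow> 'a \<Rightarrow> 'a) \<Rightarrow> 'a \<Rightarrow> 'a set" where
  "J_set m s = {e \<in> idem m. m s e = e}"

definition condition_H :: "('a \<Rightarrow> 'a \<Rightarrow> 'a) \<Rightarrow> 'a \<Rightarrow> bool" where
  "condition_H m z \<longleftrightarrow> (\<forall>s. \<exists>C. finite C \<and> C \<subseteq> J_set m s \<and>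
      (\<forall>e\<in>J_set m s. e \<noteq> z \<longrightarrow> (\<exists>c\<in>C. m e c \<noteq> z)))"

text \<open>Normalized invariant means (as functions on E(S), extended by 0 outside E(S)).\<close>
definition inv_means :: "('a \<Rightarrow> 'a \<Rightarrow> 'a) \<Rightarrow> ('a \<Rightarrow> 'a) \<Rightarrow> 'a \<Rightarrow> 'a \<Rightarrow> ('a \<Rightarrow> real) set" where
  "inv_means m st one z = {\<mu>.
     (\<forall>e. e \<notin> idem m \<longrightarrow> \<mu> e = 0) \<and>
     (\<forall>e\<in>idem m. \<mu> e \<ge> 0) \<and>
     \<mu> one = 1 \<and>
     (\<forall>s. \<mu> (m (st s) s) = \<mu> (m s (st s))) \<and>
     (\<forall>e\<in>idem m. \<forall>f\<in>idem m. m e f = z \<longrightarrow> \<mu> (join m st {e, f}) = \<mu> e + \<mu> f)}"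

definition is_filter_E :: "('a \<Rightarrow> 'a \<Rightarrow> 'a) \<Rightarrow> ('a \<Rightarrow> 'a) \<Rightarrow> 'a \<Rightarrow> 'a set \<Rightarrow> bool" where
  "is_filter_E m st z F \<longleftrightarrow> F \<subseteq> idem m \<and> F \<noteq> {} \<and> z \<notin> F \<and>
     (\<forall>e\<in>F. \<forall>f\<in>F. m e f \<in> F) \<and>
     (\<forall>e\<in>F. \<forall>f\<in>idem m. nat_le m st e f \<longrightarrow> f \<in> F)"

definition is_ultrafilter_E :: "('a \<Rightarrow> 'a \<Rightarrow> 'a) \<Rightarrow> ('a \<Rightarrow> 'a) \<Rightarrow> 'a \<Rightarrow> 'a set \<Rightarrow> bool" where
  "is_ultrafilter_E m st z F \<longleftrightarrow> is_filter_E m st z F \<and>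
     (\<forall>G. is_filter_E m st z G \<and> F \<subseteq> G \<longrightarrow> G = F)"

definition D_set :: "('a \<Rightarrow> 'a \<Rightarrow> 'a) \<Rightarrow> ('a \<Rightarrow> 'a) \<Rightarrow> 'a \<Rightarrow> 'a \<Rightarrow> 'a set set" where
  "D_set m st z e = {\<xi>. is_ultrafilter_E m st z \<xi> \<and> e \<in> \<xi>}"

text \<open>Topology of the Stone space: generated by the clopen sets D_e (topspace = all ultrafilters,
since D_1 is everything).\<close>
definition unit_top :: "('a \<Rightarrow> 'a \<Rightarrow> 'a) \<Rightarrow> ('a \<Rightarrow> 'a) \<Rightarrow> 'a \<Rightarrow> 'a set topology" where
  "unit_top m st z = topology_generated_by (range (D_set m st z))"

definition theta :: "('a \<Rightarrow> 'a \<Rightarrow> 'a) \<Rightarrow> ('a \<Rightarrow> 'a) \<Rightarrow> 'a \<Rightarrow> 'a set \<Rightarrow> 'a set" where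
  "theta m st s \<xi> = {f \<in> idem m. \<exists>e\<in>\<xi>. nat_le m st (m s (m e (st s))) f}"

text \<open>A germ [s,xi] is represented by its equivalence class of pairs (t,xi).\<close>
definition germ :: "('a \<Rightarrow> 'a \<Rightarrow> 'a) \<Rightarrow> ('a \<Rightarrow> 'a) \<Rightarrow> 'a \<Rightarrow> 'a \<Rightarrow> 'a set \<Rightarrow> ('a \<times> 'a set) set" where
  "germ m st z s \<xi> = {(t, \<xi>) | t. \<xi> \<in> D_set m st z (m (st t) t) \<and> (\<exists>e\<in>\<xi>. m s e = m t e)}"

definition Theta :: "('a \<Rightarrow> 'a \<Rightarrow> 'a) \<Rightarrow> ('a \<Rightarrow> 'a) \<Rightarrow> 'a \<Rightarrow> 'a \<Rightarrow> 'a set set \<Rightarrow> ('a \<times> 'a set) set set" where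
  "Theta m st z s U = {germ m st z s \<xi> | \<xi>. \<xi> \<in> U}"

definition groupoid_top :: "('a \<Rightarrow> 'a \<Rightarrow> 'a) \<Rightarrow> ('a \<Rightarrow> 'a) \<Rightarrow> 'a \<Rightarrow> ('a \<times> 'a set) set topology" where
  "groupoid_top m st z = topology_generated_by
     {Theta m st z s U | s U. openin (unit_top m st z) U \<and> U \<subseteq> D_set m st z (m (st s) s)}"

definition germ_d :: "('a \<times> 'a set) set \<Rightarrow> 'a set" where
  "germ_d g = snd (SOME p. p \<in> g)"

definition germ_r :: "('a \<Rightarrow> 'a \<Rightarrow> 'a) \<Rightarrow> ('a \<Rightarrow> 'a) \<Rightarrow> ('a \<times> 'a set) set \<Rightarrow> 'a set" where
  "germ_r m st g = (let p = (SOME p. p \<in> g) in theta m st (fst p) (snd p))"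

definition bisection :: "('a \<Rightarrow> 'a \<Rightarrow> 'a) \<Rightarrow> ('a \<Rightarrow> 'a) \<Rightarrow> 'a \<Rightarrow> ('a \<times> 'a set) set set \<Rightarrow> bool" where
  "bisection m st z U \<longleftrightarrow> openin (groupoid_top m st z) U \<and>
     inj_on germ_d U \<and> inj_on (germ_r m st) U"

definition borel_of_top :: "'b topology \<Rightarrow> 'b measure" where
  "borel_of_top T = sigma (topspace T) {U. openin T U}"

definition regular_borel_prob :: "'b topology \<Rightarrow> 'b measure \<Rightarrow> bool" where
  "regular_borel_prob T \<nu> \<longleftrightarrow>
     space \<nu> = topspace T \<and> sets \<nu> = sets (borel_of_top T) \<and> prob_space \<nu> \<and>
     (\<forall>A\<in>sets \<nu>.
        measure \<nu> A = Inf {measure \<nu> U | U. openin T U \<and> A \<subseteq> U} \<and>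
        measure \<nu> A = Sup {measure \<nu> K | K. compactin T K \<and> K \<subseteq> A})"

definition IM :: "('a \<Rightarrow> 'a \<Rightarrow> 'a) \<Rightarrow> ('a \<Rightarrow> 'a) \<Rightarrow> 'a \<Rightarrow> 'a set measure set" where
  "IM m st z = {\<nu>. regular_borel_prob (unit_top m st z) \<nu> \<and>
     (\<forall>U. bisection m st z U \<longrightarrow>
        measure \<nu> (germ_r m st ` U) = measure \<nu> (germ_d ` U))}"

definition eta :: "('a \<Rightarrow> 'a \<Rightarrow> 'a) \<Rightarrow> ('a \<Rightarrow> 'a) \<Rightarrow> 'a \<Rightarrow> 'a set measure \<Rightarrow> 'a \<Rightarrow> real" where
  "eta m st z \<nu> e = (if e \<in> idem m then measure \<nu> (D_set m st z e) else 0)"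

end

theory Submission
  imports Defs
begin


locale BIM =
  fixes m :: "'a::countable \<Rightarrow> 'a \<Rightarrow> 'a" and st :: "'a \<Rightarrow> 'a" and one z :: 'a
  assumes bim: "boolean_inverse_monoid m st one z"
begin

lemma imz: "inverse_monoid_zero m st one z"
  using bim by (simp add: boolean_inverse_monoid_def)

abbreviation mul (infixl "\<odot>" 70) where "a \<odot> b \<equiv> m a b"

lemma assoc: "(a \<odot> b) \<odot> c = a \<odot> (b \<odot> c)"
  using imz unfolding inverse_monoid_zero_def by simp
lemma one_l[simp]: "one \<odot> a = a" and one_r[simp]: "a \<odot> one = a"
  using imz unfolding inverse_monoid_zero_def by simp_all
lemma z_l[simp]: "z \<odot> a = z" and z_r[simp]: "a \<odot> z = z"
  using imz unfolding inverse_monoid_zero_def by simp_all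
lemma inv1: "s \<odot> (st s \<odot> s) = s" and inv2: "st s \<odot> (s \<odot> st s) = st s"
  using imz unfolding inverse_monoid_zero_def by simp_all
lemma comm: "e \<in> idem m \<Longrightarrow> f \<in> idem m \<Longrightarrow> e \<odot> f = f \<odot> e"
  using imz unfolding inverse_monoid_zero_def by simp

lemma idem_iff: "e \<in> idem m \<longleftrightarrow> e \<odot> e = e" by (simp add: idem_def)

lemma ss_idem[simp]: "st s \<odot> s \<in> idem m" "s \<odot> st s \<in> idem m"
  by (simp_all add: idem_iff assoc inv1 inv2)

lemma idem_mult[simp]: "e \<in> idem m \<Longrightarrow> f \<in> idem m \<Longrightarrow> e \<odot> f \<in> idem m"
proof -
  assume e: "e \<in> idem m" and f: "f \<in> idem m"
  have "e \<odot> f \<odot> (e \<odot> f) = e \<odot> (f \<odot> e) \<odot> f" by (simp add: assoc)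
  also have "\<dots> = e \<odot> (e \<odot> f) \<odot> f" using comm[OF e f] by simp
  also have "\<dots> = e \<odot> e \<odot> (f \<odot> f)" by (simp add: assoc)
  finally show ?thesis using e f by (simp add: idem_iff)
qed

lemma z_idem[simp]: "z \<in> idem m" and one_idem[simp]: "one \<in> idem m"
  by (simp_all add: idem_iff)

lemma inv_unique:
  assumes "a \<odot> x \<odot> a = a" "x \<odot> a \<odot> x = x" "a \<odot> y \<odot> a = a" "y \<odot> a \<odot> y = y"
  shows "x = y"
proof -
  have xa: "x \<odot> a \<in> idem m" using assms(2) by (simp add: idem_iff flip: assoc)
  have ya: "y \<odot> a \<in> idem m" using assms(4) by (simp add: idem_iff flip: assoc)
  have "a \<odot> x \<odot> (a \<odot> x) = (a \<odot> x \<odot> a) \<odot> x" by (simp add: assoc)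
  then have ax: "a \<odot> x \<in> idem m" using assms(1) by (simp add: idem_iff)
  have "a \<odot> y \<odot> (a \<odot> y) = (a \<odot> y \<odot> a) \<odot> y" by (simp add: assoc)
  then have ay: "a \<odot> y \<in> idem m" using assms(3) by (simp add: idem_iff)
  have "x = x \<odot> a \<odot> x" using assms(2) by simp
  also have "\<dots> = x \<odot> (a \<odot> y \<odot> a) \<odot> x" using assms(3) by simp
  also have "\<dots> = (x \<odot> a) \<odot> (y \<odot> a) \<odot> x" by (simp add: assoc)
  also have "\<dots> = (y \<odot> a) \<odot> (x \<odot> a) \<odot> x" using comm[OF xa ya] by simp
  also have "\<dots> = y \<odot> a \<odot> x" using assms(2) by (simp add: assoc)
  finally have 1: "x = y \<odot> a \<odot> x" .
  have "y = y \<odot> a \<odot> y" using assms(4) by simp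
  also have "\<dots> = y \<odot> (a \<odot> x \<odot> a) \<odot> y" using assms(1) by simp
  also have "\<dots> = y \<odot> ((a \<odot> x) \<odot> (a \<odot> y))" by (simp add: assoc)
  also have "\<dots> = y \<odot> ((a \<odot> y) \<odot> (a \<odot> x))" using comm[OF ax ay] by simp
  also have "\<dots> = y \<odot> a \<odot> x" using assms(4) by (simp add: assoc[symmetric])
  finally have 2: "y = y \<odot> a \<odot> x" .
  from 1 2 show ?thesis by metis
qed

lemma st_idem[simp]: "e \<in> idem m \<Longrightarrow> st e = e"
  by (rule inv_unique[of e]) (simp_all add: idem_iff assoc inv1 inv2)

lemma st_st[simp]: "st (st s) = s"
  by (rule inv_unique[of "st s"]) (simp_all add: assoc inv1 inv2)

lemma st_mult: "st (s \<odot> t) = st t \<odot> st s"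
proof (rule inv_unique[of "s \<odot> t"])
  have c: "t \<odot> st t \<odot> (st s \<odot> s) = st s \<odot> s \<odot> (t \<odot> st t)" using comm by simp
  show "s \<odot> t \<odot> st (s \<odot> t) \<odot> (s \<odot> t) = s \<odot> t" by (simp only: assoc[of "s \<odot> t" "st (s \<odot> t)" "s \<odot> t"] inv1)
  show "st (s \<odot> t) \<odot> (s \<odot> t) \<odot> st (s \<odot> t) = st (s \<odot> t)" by (simp only: assoc[of "st (s \<odot> t)" "s \<odot> t" "st (s \<odot> t)"] inv2)
  have "s \<odot> t \<odot> (st t \<odot> st s) \<odot> (s \<odot> t) = s \<odot> (t \<odot> st t \<odot> (st s \<odot> s)) \<odot> t" by (simp add: assoc)
  also have "\<dots> = (s \<odot> (st s \<odot> s)) \<odot> (t \<odot> (st t \<odot> t))" unfolding c by (simp add: assoc)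
  also have "\<dots> = s \<odot> t" by (simp add: inv1)
  finally show "s \<odot> t \<odot> (st t \<odot> st s) \<odot> (s \<odot> t) = s \<odot> t" .
  have "st t \<odot> st s \<odot> (s \<odot> t) \<odot> (st t \<odot> st s) = st t \<odot> (st s \<odot> s \<odot> (t \<odot> st t)) \<odot> st s" by (simp add: assoc)
  also have "\<dots> = (st t \<odot> (t \<odot> st t)) \<odot> (st s \<odot> (s \<odot> st s))" unfolding c[symmetric] by (simp add: assoc)
  also have "\<dots> = st t \<odot> st s" by (simp add: inv2)
  finally show "st t \<odot> st s \<odot> (s \<odot> t) \<odot> (st t \<odot> st s) = st t \<odot> st s" .
qed

end


context BIM begin

lemma bia: "idem_boolean_algebra m st one z"
  using bim by (simp add: boolean_inverse_monoid_def)

lemma nat_le_idem: "e \<in> idem m \<Longrightarrow> f \<in> idem m \<Longrightarrow> nat_le m st e f \<longleftrightarrow> e \<odot> f = e"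
  unfolding nat_le_def using comm[of e f] by (auto simp: idem_iff)

lemma nat_le_refl: "nat_le m st s s"
  unfolding nat_le_def by (simp add: inv1)

lemma nat_le_z: "nat_le m st z u"
  unfolding nat_le_def by simp

lemma nat_le_antisym: assumes "nat_le m st s t" "nat_le m st t s" shows "s = t"
proof -
  have s: "s = t \<odot> (st s \<odot> s)" and t: "t = s \<odot> (st t \<odot> t)"
    using assms unfolding nat_le_def by auto
  have "t = t \<odot> (st s \<odot> s) \<odot> (st t \<odot> t)" using t s by simp
  also have "\<dots> = t \<odot> ((st s \<odot> s) \<odot> (st t \<odot> t))" by (simp add: assoc)
  also have "\<dots> = t \<odot> ((st t \<odot> t) \<odot> (st s \<odot> s))" using comm[of "st s \<odot> s" "st t \<odot> t"] by simp
  also have "\<dots> = (t \<odot> (st t \<odot> t)) \<odot> (st s \<odot> s)" by (simp add: assoc)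
  also have "\<dots> = t \<odot> (st s \<odot> s)" by (simp add: inv1)
  finally show ?thesis using s by simp
qed

lemma join_eq: "is_join m st A j \<Longrightarrow> join m st A = j"
  unfolding join_def
  by (rule the_equality) (auto simp: is_join_def intro: nat_le_antisym)

definition jn where "jn e f = join m st {e, f}"

lemma jn_ex: assumes "e \<in> idem m" "f \<in> idem m"
  shows "jn e f \<in> idem m" "is_join m st {e, f} (jn e f)"
proof -
  obtain j where "j \<in> idem m" "is_join m st {e, f} j" using bia assms
    unfolding idem_boolean_algebra_def by blast
  then show "jn e f \<in> idem m" "is_join m st {e, f} (jn e f)" using join_eq jn_def by auto
qed

lemma jn_upper: assumes "e \<in> idem m" "f \<in> idem m"
  shows "e \<odot> jn e f = e" "f \<odot> jn e f = f"
  using jn_ex[OF assms] assms unfolding is_join_def by (auto simp: nat_le_idem)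

lemma jn_distrib: "e \<in> idem m \<Longrightarrow> f \<in> idem m \<Longrightarrow> g \<in> idem m \<Longrightarrow> e \<odot> jn f g = jn (e \<odot> f) (e \<odot> g)"
  using bia unfolding idem_boolean_algebra_def jn_def by blast

lemma jn_z: assumes "x \<in> idem m" shows "jn x z = x"
proof -
  have "is_join m st {x, z} x" unfolding is_join_def using nat_le_refl nat_le_z by auto
  then show ?thesis by (simp add: jn_def join_eq)
qed

definition cmp where "cmp e = (SOME f. f \<in> idem m \<and> e \<odot> f = z \<and> is_join m st {e, f} one)"

lemma cmp: assumes "e \<in> idem m" shows "cmp e \<in> idem m" "e \<odot> cmp e = z" "jn e (cmp e) = one"
proof -
  have "\<exists>f. f \<in> idem m \<and> e \<odot> f = z \<and> is_join m st {e, f} one"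
    using bia assms unfolding idem_boolean_algebra_def by blast
  then have "cmp e \<in> idem m \<and> e \<odot> cmp e = z \<and> is_join m st {e, cmp e} one"
    unfolding cmp_def by (rule someI_ex)
  then show "cmp e \<in> idem m" "e \<odot> cmp e = z" "jn e (cmp e) = one"
    by (auto simp: jn_def join_eq)
qed

lemma mono2: assumes "a \<in> idem m" "b \<in> idem m" "f \<in> idem m" "g \<in> idem m" "a \<odot> f = a" "b \<odot> g = b"
  shows "(a \<odot> b) \<odot> (f \<odot> g) = a \<odot> b"
proof -
  have "(a \<odot> b) \<odot> (f \<odot> g) = a \<odot> (b \<odot> f) \<odot> g" by (simp add: assoc)
  also have "\<dots> = a \<odot> (f \<odot> b) \<odot> g" using comm[of b f] assms by simp
  also have "\<dots> = (a \<odot> f) \<odot> (b \<odot> g)" by (simp add: assoc)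
  finally show ?thesis using assms by simp
qed

lemma le_trans_idem: "a \<odot> b = a \<Longrightarrow> b \<odot> c = b \<Longrightarrow> a \<odot> c = a"
  by (metis assoc)

lemma le_mult1: assumes "e \<in> idem m" "f \<in> idem m" shows "(e \<odot> f) \<odot> e = e \<odot> f"
proof -
  have "(e \<odot> f) \<odot> e = e \<odot> (e \<odot> f)" using comm[of f e] assms by (simp add: assoc)
  also have "\<dots> = (e \<odot> e) \<odot> f" by (simp add: assoc)
  finally show ?thesis using assms by (simp add: idem_iff)
qed

lemma le_mult2: "e \<in> idem m \<Longrightarrow> f \<in> idem m \<Longrightarrow> (e \<odot> f) \<odot> f = e \<odot> f"
  by (simp add: assoc idem_iff)

section \<open>filters\<close>

abbreviation "filt F \<equiv> is_filter_E m st z F"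
abbreviation "ultra F \<equiv> is_ultrafilter_E m st z F"

lemma filt_idem: "filt F \<Longrightarrow> e \<in> F \<Longrightarrow> e \<in> idem m"
  unfolding is_filter_E_def by auto
lemma filt_z: "filt F \<Longrightarrow> z \<notin> F"
  unfolding is_filter_E_def by auto
lemma filt_mult: "filt F \<Longrightarrow> e \<in> F \<Longrightarrow> f \<in> F \<Longrightarrow> e \<odot> f \<in> F"
  unfolding is_filter_E_def by auto
lemma filt_up: "filt F \<Longrightarrow> e \<in> F \<Longrightarrow> f \<in> idem m \<Longrightarrow> e \<odot> f = e \<Longrightarrow> f \<in> F"
  unfolding is_filter_E_def using nat_le_idem by (metis subsetD)
lemma filt_one: "filt F \<Longrightarrow> one \<in> F"
proof -
  assume F: "filt F"
  then obtain e where "e \<in> F" unfolding is_filter_E_def by auto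
  then show ?thesis using filt_up[OF F] by simp
qed
lemma filt_multD: "filt F \<Longrightarrow> e \<in> idem m \<Longrightarrow> f \<in> idem m \<Longrightarrow> e \<odot> f \<in> F \<Longrightarrow> e \<in> F \<and> f \<in> F"
  using filt_up le_mult1 le_mult2 by blast

definition prodl where "prodl xs = foldr m xs one"

lemma prodl_simps[simp]: "prodl [] = one" "prodl (x # xs) = x \<odot> prodl xs"
  by (simp_all add: prodl_def)

lemma prodl_idem: "set xs \<subseteq> idem m \<Longrightarrow> prodl xs \<in> idem m"
  by (induction xs) auto

lemma prodl_le: "set xs \<subseteq> idem m \<Longrightarrow> x \<in> set xs \<Longrightarrow> prodl xs \<odot> x = prodl xs"
proof (induction xs)
  case Nil then show ?case by simp
next
  case (Cons y ys)
  have y: "y \<in> idem m" and ys: "set ys \<subseteq> idem m" using Cons.prems by auto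
  have P: "prodl ys \<in> idem m" using prodl_idem[OF ys] .
  show ?case
  proof (cases "x = y")
    case True
    then show ?thesis using le_mult1[OF y P] by simp
  next
    case False
    then have "prodl ys \<odot> x = prodl ys" using Cons by auto
    then show ?thesis by (simp add: assoc)
  qed
qed

lemma prodl_glb: "g \<in> idem m \<Longrightarrow> set xs \<subseteq> idem m \<Longrightarrow> (\<forall>x\<in>set xs. g \<odot> x = g) \<Longrightarrow> g \<odot> prodl xs = g"
  by (induction xs) (auto simp flip: assoc)

lemma prodl_append: "prodl (xs @ ys) = prodl xs \<odot> prodl ys"
  by (induction xs) (auto simp: assoc)

lemma filt_prodl: "filt F \<Longrightarrow> set xs \<subseteq> F \<Longrightarrow> prodl xs \<in> F"
  by (induction xs) (auto simp: filt_one filt_mult)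

definition gen where "gen A = {f \<in> idem m. \<exists>xs. set xs \<subseteq> A \<and> prodl xs \<odot> f = prodl xs}"

lemma gen_sup: "A \<subseteq> idem m \<Longrightarrow> A \<subseteq> gen A"
  unfolding gen_def by (auto intro!: exI[of _ "[_]"] simp: idem_iff)

lemma gen_filter: assumes A: "A \<subseteq> idem m" and nz: "z \<notin> gen A" shows "filt (gen A)"
  unfolding is_filter_E_def
proof (intro conjI ballI impI)
  show "gen A \<subseteq> idem m" unfolding gen_def by auto
  show "gen A \<noteq> {}" unfolding gen_def by (auto intro!: exI[of _ one] exI[of _ "[]"])
  show "z \<notin> gen A" by fact
next
  fix e f assume e: "e \<in> gen A" and f: "f \<in> gen A"
  then obtain xs ys where xs: "set xs \<subseteq> A" "prodl xs \<odot> e = prodl xs" and ys: "set ys \<subseteq> A" "prodl ys \<odot> f = prodl ys"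
    and ei: "e \<in> idem m" and fi: "f \<in> idem m" unfolding gen_def by auto
  have "prodl (xs @ ys) \<odot> (e \<odot> f) = prodl (xs @ ys)"
    unfolding prodl_append using xs ys ei fi A
    by (intro mono2) (auto intro!: prodl_idem)
  then show "e \<odot> f \<in> gen A" unfolding gen_def using ei fi xs ys
    by (auto intro!: exI[of _ "xs @ ys"])
next
  fix e f assume e: "e \<in> gen A" and f: "f \<in> idem m" and le: "nat_le m st e f"
  then obtain xs where xs: "set xs \<subseteq> A" "prodl xs \<odot> e = prodl xs" and ei: "e \<in> idem m"
    unfolding gen_def by auto
  have "e \<odot> f = e" using le nat_le_idem ei f by auto
  then have "prodl xs \<odot> f = prodl xs" using xs le_trans_idem by metis
  then show "f \<in> gen A" unfolding gen_def using f xs by auto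
qed

lemma ultra_exists: assumes F: "filt F" shows "\<exists>\<xi>. ultra \<xi> \<and> F \<subseteq> \<xi>"
proof -
  let ?A = "{G. filt G \<and> F \<subseteq> G}"
  have "\<exists>M\<in>?A. \<forall>X\<in>?A. M \<subseteq> X \<longrightarrow> X = M"
  proof (rule Zorn_Lemma2, intro ballI)
    fix C assume C: "C \<in> chains ?A"
    show "\<exists>U\<in>?A. \<forall>X\<in>C. X \<subseteq> U"
    proof (cases "C = {}")
      case True then show ?thesis using F by auto
    next
      case False
      have CA: "C \<subseteq> ?A" and ch: "chain\<^sub>\<subseteq> C" using C by (auto simp: chains_def)
      have "filt (\<Union>C)" unfolding is_filter_E_def
      proof (intro conjI ballI impI)
        show "\<Union>C \<subseteq> idem m" using CA filt_idem by blast
        show "\<Union>C \<noteq> {}" using False CA unfolding is_filter_E_def by blast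
        show "z \<notin> \<Union>C" using CA filt_z by blast
      next
        fix e f assume "e \<in> \<Union>C" "f \<in> \<Union>C"
        then obtain G H where G: "G \<in> C" "e \<in> G" and H: "H \<in> C" "f \<in> H" by auto
        from ch G H have "G \<subseteq> H \<or> H \<subseteq> G" unfolding chain_subset_def by auto
        then show "e \<odot> f \<in> \<Union>C" using G H CA filt_mult by blast
      next
        fix e f assume "e \<in> \<Union>C" "f \<in> idem m" "nat_le m st e f"
        then show "f \<in> \<Union>C" using CA unfolding is_filter_E_def by blast
      qed
      obtain X where "X \<in> C" using False by auto
      then have "F \<subseteq> \<Union>C" using CA by auto
      then show ?thesis using \<open>filt (\<Union>C)\<close> by blast
    qed
  qed
  then obtain M where M: "filt M" "F \<subseteq> M" and max: "\<forall>X\<in>?A. M \<subseteq> X \<longrightarrow> X = M" by auto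
  have "ultra M" unfolding is_ultrafilter_E_def using M max by auto
  then show ?thesis using M by auto
qed

lemma exists_ultra: assumes "e \<in> idem m" "e \<noteq> z" shows "\<exists>\<xi>. ultra \<xi> \<and> e \<in> \<xi>"
proof -
  have "z \<notin> gen {e}"
  proof
    assume "z \<in> gen {e}"
    then obtain xs where xs: "set xs \<subseteq> {e}" "prodl xs = z" unfolding gen_def by auto
    have "e \<odot> prodl xs = e" using xs assms by (intro prodl_glb) (auto simp: idem_iff)
    then show False using xs assms by simp
  qed
  then have "filt (gen {e})" using gen_filter assms by auto
  then show ?thesis using ultra_exists gen_sup[of "{e}"] assms by blast
qed

lemma ultra_filt: "ultra \<xi> \<Longrightarrow> filt \<xi>" unfolding is_ultrafilter_E_def by auto

lemma ultra_disj: assumes U: "ultra \<xi>" and e: "e \<in> idem m" and ne: "e \<notin> \<xi>"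
  shows "\<exists>g\<in>\<xi>. g \<odot> e = z"
proof (rule ccontr)
  assume nex: "\<not> ?thesis"
  have F: "filt \<xi>" using U ultra_filt by auto
  have A: "insert e \<xi> \<subseteq> idem m" using e F filt_idem by auto
  have "z \<notin> gen (insert e \<xi>)"
  proof
    assume "z \<in> gen (insert e \<xi>)"
    then obtain xs where xs: "set xs \<subseteq> insert e \<xi>" "prodl xs = z" unfolding gen_def by auto
    let ?ys = "filter (\<lambda>x. x \<noteq> e) xs"
    have ys: "set ?ys \<subseteq> \<xi>" using xs by auto
    let ?g = "prodl ?ys"
    have g: "?g \<in> \<xi>" using filt_prodl[OF F ys] .
    have gi: "?g \<in> idem m" using g F filt_idem by auto
    have "?g \<odot> e \<odot> prodl xs = ?g \<odot> e"
    proof (rule prodl_glb)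
      show "?g \<odot> e \<in> idem m" using gi e by simp
      show "set xs \<subseteq> idem m" using xs A by auto
      show "\<forall>x\<in>set xs. ?g \<odot> e \<odot> x = ?g \<odot> e"
      proof
        fix x assume x: "x \<in> set xs"
        show "?g \<odot> e \<odot> x = ?g \<odot> e"
        proof (cases "x = e")
          case True then show ?thesis using e by (simp add: assoc idem_iff)
        next
          case False
          then have gx: "?g \<odot> x = ?g" using x ys F filt_idem by (intro prodl_le) auto
          have xi: "x \<in> idem m" using x xs A by auto
          have "?g \<odot> e \<odot> x = ?g \<odot> (x \<odot> e)" using comm[OF e xi] by (simp add: assoc)
          also have "\<dots> = ?g \<odot> e" using gx by (simp add: assoc[symmetric])
          finally show ?thesis .
        qed
      qed
    qed
    then have "?g \<odot> e = z" using xs by simp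
    then show False using nex g by auto
  qed
  then have "filt (gen (insert e \<xi>))" using gen_filter A by auto
  moreover have "\<xi> \<subseteq> gen (insert e \<xi>)" using gen_sup[OF A] by auto
  ultimately have "gen (insert e \<xi>) = \<xi>" using U unfolding is_ultrafilter_E_def by auto
  then show False using gen_sup[OF A] ne by auto
qed

lemma ultra_mult: "ultra \<xi> \<Longrightarrow> e \<in> idem m \<Longrightarrow> f \<in> idem m \<Longrightarrow> e \<odot> f \<in> \<xi> \<longleftrightarrow> e \<in> \<xi> \<and> f \<in> \<xi>"
  using ultra_filt filt_multD filt_mult by blast

lemma ultra_jn: assumes U: "ultra \<xi>" and e: "e \<in> idem m" and f: "f \<in> idem m"
  shows "jn e f \<in> \<xi> \<longleftrightarrow> e \<in> \<xi> \<or> f \<in> \<xi>"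
proof
  have F: "filt \<xi>" using U ultra_filt by auto
  assume j: "jn e f \<in> \<xi>"
  show "e \<in> \<xi> \<or> f \<in> \<xi>"
  proof (rule ccontr)
    assume "\<not> (e \<in> \<xi> \<or> f \<in> \<xi>)"
    then obtain g h where g: "g \<in> \<xi>" "g \<odot> e = z" and h: "h \<in> \<xi>" "h \<odot> f = z"
      using ultra_disj[OF U e] ultra_disj[OF U f] by blast
    have gi: "g \<in> idem m" and hi: "h \<in> idem m" using g h F filt_idem by auto
    have "g \<odot> h \<odot> e = z" using g comm[OF gi hi] by (simp add: assoc)
    moreover have "g \<odot> h \<odot> f = z" using h by (simp add: assoc)
    ultimately have "g \<odot> h \<odot> jn e f = z" using jn_distrib[of "g \<odot> h" e f] gi hi e f jn_z by simp
    moreover have "g \<odot> h \<odot> jn e f \<in> \<xi>" using F g h j filt_mult by auto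
    ultimately show False using F filt_z by auto
  qed
next
  have F: "filt \<xi>" using U ultra_filt by auto
  assume "e \<in> \<xi> \<or> f \<in> \<xi>"
  then show "jn e f \<in> \<xi>" using filt_up[OF F] jn_upper[OF e f] jn_ex[OF e f] by blast
qed

lemma ultra_cmp: assumes U: "ultra \<xi>" and e: "e \<in> idem m"
  shows "cmp e \<in> \<xi> \<longleftrightarrow> e \<notin> \<xi>"
proof -
  have F: "filt \<xi>" using U ultra_filt by auto
  have "jn e (cmp e) \<in> \<xi>" using cmp[OF e] filt_one[OF F] by simp
  then have 1: "e \<in> \<xi> \<or> cmp e \<in> \<xi>" using ultra_jn[OF U e cmp(1)[OF e]] by simp
  have "\<not> (e \<in> \<xi> \<and> cmp e \<in> \<xi>)" using filt_mult[OF F] cmp[OF e] filt_z[OF F] by metis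
  with 1 show ?thesis by auto
qed

lemma ultra_z: "ultra \<xi> \<Longrightarrow> z \<notin> \<xi>" using ultra_filt filt_z by blast
lemma ultra_one: "ultra \<xi> \<Longrightarrow> one \<in> \<xi>" using ultra_filt filt_one by blast
lemma ultra_idem: "ultra \<xi> \<Longrightarrow> e \<in> \<xi> \<Longrightarrow> e \<in> idem m" using ultra_filt filt_idem by blast

end


context BIM begin

definition XX where "XX = {\<xi>. ultra \<xi>}"
abbreviation "DD e \<equiv> D_set m st z e"
abbreviation "TT \<equiv> unit_top m st z"

lemma D_iff: "\<xi> \<in> DD e \<longleftrightarrow> ultra \<xi> \<and> e \<in> \<xi>" by (simp add: D_set_def)

lemma D_sub: "DD e \<subseteq> XX" by (auto simp: D_iff XX_def)
lemma D_one: "DD one = XX" by (auto simp: D_iff XX_def ultra_one)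
lemma D_z: "DD z = {}" by (auto simp: D_iff ultra_z)
lemma D_nonidem: "e \<notin> idem m \<Longrightarrow> DD e = {}" by (auto simp: D_iff dest: ultra_idem)
lemma D_mult: "e \<in> idem m \<Longrightarrow> f \<in> idem m \<Longrightarrow> DD (e \<odot> f) = DD e \<inter> DD f"
  by (auto simp: D_iff ultra_mult)
lemma D_jn: "e \<in> idem m \<Longrightarrow> f \<in> idem m \<Longrightarrow> DD (jn e f) = DD e \<union> DD f"
  by (auto simp: D_iff ultra_jn)
lemma D_cmp: "e \<in> idem m \<Longrightarrow> DD (cmp e) = XX - DD e"
  by (auto simp: D_iff XX_def ultra_cmp)

lemma D_inj_aux: assumes e: "e \<in> idem m" and f: "f \<in> idem m" and sub: "DD e \<subseteq> DD f"
  shows "e \<odot> f = e"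
proof (rule ccontr)
  assume ne: "e \<odot> f \<noteq> e"
  have cf: "cmp f \<in> idem m" using cmp f by auto
  have "e \<odot> cmp f \<noteq> z"
  proof
    assume ez: "e \<odot> cmp f = z"
    have "e = e \<odot> jn f (cmp f)" using cmp(3)[OF f] by simp
    also have "\<dots> = jn (e \<odot> f) (e \<odot> cmp f)" using jn_distrib e f cf by auto
    also have "\<dots> = e \<odot> f" using ez jn_z e f by simp
    finally show False using ne by simp
  qed
  then obtain \<xi> where "ultra \<xi>" "e \<odot> cmp f \<in> \<xi>" using exists_ultra[of "e \<odot> cmp f"] e cf by auto
  then have "\<xi> \<in> DD e" "\<xi> \<notin> DD f" using ultra_mult[of \<xi> e "cmp f"] ultra_cmp[of \<xi> f] e f cf
    by (auto simp: D_iff)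
  then show False using sub by auto
qed

lemma D_le_iff: "e \<in> idem m \<Longrightarrow> f \<in> idem m \<Longrightarrow> DD e \<subseteq> DD f \<longleftrightarrow> e \<odot> f = e"
  using D_inj_aux D_mult[of e f] by auto

lemma D_inj: assumes "e \<in> idem m" "f \<in> idem m" "DD e = DD f" shows "e = f"
proof -
  have "e \<odot> f = e" "f \<odot> e = f" using D_le_iff assms by auto
  then show ?thesis using comm[OF assms(1,2)] by simp
qed

lemma D_empty_iff: "e \<in> idem m \<Longrightarrow> DD e = {} \<longleftrightarrow> e = z"
  using D_inj[of e z] D_z by auto

lemma topspace_TT: "topspace TT = XX"
proof -
  have "\<Union>(range DD) = XX" using D_sub D_one by auto
  then show ?thesis unfolding unit_top_def by simp
qed

lemma openin_TT: "openin TT U \<longleftrightarrow> generate_topology_on (range DD) U"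
  unfolding unit_top_def by (rule openin_topology_generated_by_iff)

lemma open_D: "openin TT (DD e)"
  unfolding openin_TT by (rule generate_topology_on.Basis) auto

lemma closed_D: "closedin TT (DD e)"
proof (cases "e \<in> idem m")
  case True
  then show ?thesis unfolding closedin_def topspace_TT using D_sub open_D[of "cmp e"] D_cmp[OF True] by auto
next
  case False
  then show ?thesis using D_nonidem by simp
qed

lemma open_basis_gen: "generate_topology_on (range DD) U \<Longrightarrow> \<xi> \<in> U \<Longrightarrow> \<exists>e\<in>idem m. \<xi> \<in> DD e \<and> DD e \<subseteq> U"
proof (induction arbitrary: \<xi> rule: generate_topology_on.induct)
  case Empty then show ?case by simp
next
  case (Int a b)
  then obtain e f where e: "e \<in> idem m" "\<xi> \<in> DD e" "DD e \<subseteq> a" and f: "f \<in> idem m" "\<xi> \<in> DD f" "DD f \<subseteq> b"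
    by blast
  then show ?case using D_mult[OF e(1) f(1)] by (intro bexI[of _ "e \<odot> f"]) auto
next
  case (UN K)
  then show ?case by blast
next
  case (Basis s)
  then obtain e where s: "s = DD e" by auto
  then have "e \<in> idem m" using Basis D_nonidem by auto
  then show ?case using s Basis by auto
qed

lemma open_basis: "openin TT U \<Longrightarrow> \<xi> \<in> U \<Longrightarrow> \<exists>e\<in>idem m. \<xi> \<in> DD e \<and> DD e \<subseteq> U"
  using open_basis_gen openin_TT by auto

lemma open_Union_D: "openin TT U \<Longrightarrow> U = \<Union>(DD ` {e \<in> idem m. DD e \<subseteq> U})"
  using open_basis by blast

lemma D_cover_finite: assumes C: "C \<subseteq> idem m" and cov: "XX \<subseteq> \<Union>(DD ` C)"
  shows "\<exists>F\<subseteq>C. finite F \<and> XX \<subseteq> \<Union>(DD ` F)"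
proof (cases "z \<in> gen (cmp ` C)")
  case False
  have A: "cmp ` C \<subseteq> idem m" using C cmp by auto
  then have "filt (gen (cmp ` C))" using gen_filter False by auto
  then obtain \<xi> where U: "ultra \<xi>" and sub: "gen (cmp ` C) \<subseteq> \<xi>" using ultra_exists by blast
  then have "\<xi> \<in> XX" by (simp add: XX_def)
  then obtain c where c: "c \<in> C" "c \<in> \<xi>" using cov by (auto simp: D_iff)
  have "cmp c \<in> \<xi>" using sub gen_sup[OF A] c by auto
  then show ?thesis using ultra_cmp[OF U] c C by auto
next
  case True
  then obtain xs where xs: "set xs \<subseteq> cmp ` C" "prodl xs = z" unfolding gen_def by auto
  then obtain F where F: "F \<subseteq> C" "finite F" "set xs = cmp ` F"
    using finite_subset_image[of "set xs" cmp C] by auto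
  have "XX \<subseteq> \<Union>(DD ` F)"
  proof
    fix \<xi> assume "\<xi> \<in> XX"
    then have U: "ultra \<xi>" by (simp add: XX_def)
    show "\<xi> \<in> \<Union>(DD ` F)"
    proof (rule ccontr)
      assume "\<xi> \<notin> \<Union>(DD ` F)"
      then have "\<forall>c\<in>F. cmp c \<in> \<xi>" using ultra_cmp[OF U] F C U by (auto simp: D_iff)
      then have "set xs \<subseteq> \<xi>" using F by auto
      then have "prodl xs \<in> \<xi>" using filt_prodl ultra_filt[OF U] by auto
      then show False using xs ultra_z[OF U] by simp
    qed
  qed
  then show ?thesis using F by auto
qed

lemma compact_TT: "compact_space TT"
  unfolding compact_space_alt topspace_TT
proof (intro allI impI)
  fix \<U> assume H: "(\<forall>U\<in>\<U>. openin TT U) \<and> XX \<subseteq> \<Union>\<U>"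
  let ?C = "{e \<in> idem m. \<exists>U\<in>\<U>. DD e \<subseteq> U}"
  have "XX \<subseteq> \<Union>(DD ` ?C)"
  proof
    fix \<xi> assume "\<xi> \<in> XX"
    then obtain U where "U \<in> \<U>" "\<xi> \<in> U" using H by auto
    then obtain e where "e \<in> idem m" "\<xi> \<in> DD e" "DD e \<subseteq> U" using open_basis H by blast
    then show "\<xi> \<in> \<Union>(DD ` ?C)" using \<open>U \<in> \<U>\<close> by blast
  qed
  then obtain F where F: "F \<subseteq> ?C" "finite F" "XX \<subseteq> \<Union>(DD ` F)" using D_cover_finite[of ?C] by auto
  define u where "u e = (SOME U. U \<in> \<U> \<and> DD e \<subseteq> U)" for e
  have u: "u e \<in> \<U> \<and> DD e \<subseteq> u e" if "e \<in> F" for e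
    unfolding u_def by (rule someI_ex) (use that F in auto)
  show "\<exists>\<F>. finite \<F> \<and> \<F> \<subseteq> \<U> \<and> XX \<subseteq> \<Union>\<F>"
  proof (intro exI[of _ "u ` F"] conjI)
    show "finite (u ` F)" using F by simp
    show "u ` F \<subseteq> \<U>" using u by auto
    show "XX \<subseteq> \<Union>(u ` F)"
    proof
      fix \<xi> assume "\<xi> \<in> XX"
      then obtain e where "e \<in> F" "\<xi> \<in> DD e" using F by auto
      then show "\<xi> \<in> \<Union>(u ` F)" using u[of e] by auto
    qed
  qed
qed

lemma closed_compact: "closedin TT K \<Longrightarrow> compactin TT K"
  using compact_TT closedin_compact_space by blast

end


context BIM begin

definition cj where "cj s e = s \<odot> (e \<odot> st s)"

lemma cj_alt: "e \<in> idem m \<Longrightarrow> cj s e = (s \<odot> e) \<odot> st (s \<odot> e)"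
  unfolding cj_def by (simp add: st_mult assoc idem_iff flip: assoc[of e e])

lemma cj_mult: assumes "a \<in> idem m" "b \<in> idem m" shows "cj s a \<odot> cj s b = cj s (a \<odot> b)"
proof -
  have "cj s a \<odot> cj s b = s \<odot> (a \<odot> (st s \<odot> s) \<odot> b) \<odot> st s" unfolding cj_def by (simp add: assoc)
  also have "\<dots> = s \<odot> ((st s \<odot> s) \<odot> a \<odot> b) \<odot> st s" using comm[of a "st s \<odot> s"] assms by simp
  also have "\<dots> = (s \<odot> (st s \<odot> s)) \<odot> (a \<odot> b) \<odot> st s" by (simp add: assoc)
  also have "\<dots> = cj s (a \<odot> b)" unfolding cj_def by (simp add: inv1 assoc)
  finally show ?thesis .
qed

lemma cj_idem[simp]: "e \<in> idem m \<Longrightarrow> cj s e \<in> idem m"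
  using cj_mult[of e e s] by (simp add: idem_iff)

lemma cj_mono: "a \<in> idem m \<Longrightarrow> b \<in> idem m \<Longrightarrow> a \<odot> b = a \<Longrightarrow> cj s a \<odot> cj s b = cj s a"
  by (simp add: cj_mult)

lemma cj_cj: "e \<in> idem m \<Longrightarrow> cj (st s) (cj s e) = e \<odot> (st s \<odot> s)"
proof -
  assume e: "e \<in> idem m"
  have "cj (st s) (cj s e) = (st s \<odot> s) \<odot> e \<odot> (st s \<odot> s)" unfolding cj_def by (simp add: assoc)
  also have "\<dots> = e \<odot> (st s \<odot> s) \<odot> (st s \<odot> s)" using comm[of e "st s \<odot> s"] e by simp
  also have "\<dots> = e \<odot> (st s \<odot> s)" using ss_idem by (simp add: assoc idem_iff)
  finally show ?thesis .
qed

lemma cj_ss: "cj s (st s \<odot> s) = s \<odot> st s"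
  unfolding cj_def by (simp add: assoc inv2)

lemma cj_z[simp]: "cj s z = z" unfolding cj_def by simp

lemma theta_iff: "f \<in> theta m st s \<xi> \<longleftrightarrow> f \<in> idem m \<and> (\<exists>e\<in>\<xi>. nat_le m st (cj s e) f)"
  unfolding theta_def cj_def by auto

lemma theta_iff2: "filt \<xi> \<Longrightarrow> f \<in> theta m st s \<xi> \<longleftrightarrow> f \<in> idem m \<and> (\<exists>e\<in>\<xi>. cj s e \<odot> f = cj s e)"
  unfolding theta_iff using nat_le_idem filt_idem cj_idem by metis

lemma theta_mem: "filt \<xi> \<Longrightarrow> e \<in> \<xi> \<Longrightarrow> cj s e \<in> theta m st s \<xi>"
  unfolding theta_iff2 using filt_idem by (auto simp: idem_iff[symmetric] intro!: bexI[of _ e])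

lemma theta_mono: "\<xi> \<subseteq> \<eta> \<Longrightarrow> theta m st s \<xi> \<subseteq> theta m st s \<eta>"
  unfolding subset_iff theta_iff by blast

lemma theta_filt: assumes F: "filt F" and ss: "st s \<odot> s \<in> F"
  shows "filt (theta m st s F)"
  unfolding is_filter_E_def
proof (intro conjI ballI impI)
  show "theta m st s F \<subseteq> idem m" by (auto simp: theta_iff)
  show "theta m st s F \<noteq> {}" using theta_mem[OF F ss] by auto
  show "z \<notin> theta m st s F"
  proof
    assume "z \<in> theta m st s F"
    then obtain e where e: "e \<in> F" "cj s e \<odot> z = cj s e" using theta_iff2[OF F] by auto
    have ei: "e \<in> idem m" using e F filt_idem by auto
    have "cj s e = z" using e by simp
    then have "e \<odot> (st s \<odot> s) = z" using cj_cj[OF ei, of s] by simp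
    moreover have "e \<odot> (st s \<odot> s) \<in> F" using filt_mult[OF F e(1) ss] .
    ultimately show False using filt_z[OF F] by simp
  qed
next
  fix f g assume f: "f \<in> theta m st s F" and g: "g \<in> theta m st s F"
  then obtain e e' where e: "e \<in> F" "cj s e \<odot> f = cj s e" and e': "e' \<in> F" "cj s e' \<odot> g = cj s e'"
    and fi: "f \<in> idem m" and gi: "g \<in> idem m" using theta_iff2[OF F] by auto
  have ei: "e \<in> idem m" "e' \<in> idem m" using e e' F filt_idem by auto
  have "cj s (e \<odot> e') \<odot> (f \<odot> g) = cj s (e \<odot> e')"
    using mono2[of "cj s e" "cj s e'" f g] e e' ei fi gi by (simp add: cj_mult)
  then show "f \<odot> g \<in> theta m st s F" using theta_iff2[OF F] filt_mult[OF F e(1) e'(1)] fi gi by auto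
next
  fix f g assume f: "f \<in> theta m st s F" and g: "g \<in> idem m" and le: "nat_le m st f g"
  then obtain e where e: "e \<in> F" "cj s e \<odot> f = cj s e" and fi: "f \<in> idem m" using theta_iff2[OF F] by auto
  have "f \<odot> g = f" using le nat_le_idem fi g by auto
  then have "cj s e \<odot> g = cj s e" using e le_trans_idem by metis
  then show "g \<in> theta m st s F" using theta_iff2[OF F] e g by auto
qed

lemma theta_ss: "filt F \<Longrightarrow> st s \<odot> s \<in> F \<Longrightarrow> s \<odot> st s \<in> theta m st s F"
  using theta_mem[of F "st s \<odot> s" s] cj_ss by simp

lemma theta_inv: assumes F: "filt F" and ss: "st s \<odot> s \<in> F"
  shows "theta m st (st s) (theta m st s F) = F"
proof
  have TF: "filt (theta m st s F)" using theta_filt[OF F ss] .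
  show "theta m st (st s) (theta m st s F) \<subseteq> F"
  proof
    fix f assume "f \<in> theta m st (st s) (theta m st s F)"
    then obtain g where fi: "f \<in> idem m" and g: "g \<in> theta m st s F" "cj (st s) g \<odot> f = cj (st s) g"
      using theta_iff2[OF TF] by auto
    obtain e where e: "e \<in> F" "cj s e \<odot> g = cj s e" and gi: "g \<in> idem m" using g theta_iff2[OF F] by auto
    have ei: "e \<in> idem m" using e F filt_idem by auto
    have "cj (st s) (cj s e) \<odot> cj (st s) g = cj (st s) (cj s e)" using cj_mono e ei gi by simp
    then have "cj (st s) (cj s e) \<odot> f = cj (st s) (cj s e)" using g le_trans_idem by metis
    then have "(e \<odot> (st s \<odot> s)) \<odot> f = e \<odot> (st s \<odot> s)" using cj_cj[OF ei] by simp
    moreover have "e \<odot> (st s \<odot> s) \<in> F" using filt_mult[OF F e(1) ss] .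
    ultimately show "f \<in> F" using filt_up[OF F] fi by blast
  qed
  show "F \<subseteq> theta m st (st s) (theta m st s F)"
  proof
    fix f assume f: "f \<in> F"
    have fi: "f \<in> idem m" using f F filt_idem by auto
    let ?e = "f \<odot> (st s \<odot> s)"
    have e: "?e \<in> F" using filt_mult[OF F f ss] .
    have ei: "?e \<in> idem m" using fi by simp
    have "cj s ?e \<in> theta m st s F" using theta_mem[OF F e] .
    moreover have "cj (st s) (cj s ?e) = ?e" using cj_cj[OF ei]
      by (simp add: assoc inv1)
    moreover have "?e \<odot> f = ?e" using le_mult1[OF fi, of "st s \<odot> s"] by simp
    ultimately show "f \<in> theta m st (st s) (theta m st s F)"
      using theta_iff2[OF TF] fi by metis
  qed
qed

lemma theta_ultra: assumes U: "ultra \<xi>" and ss: "st s \<odot> s \<in> \<xi>"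
  shows "ultra (theta m st s \<xi>)"
proof -
  have F: "filt \<xi>" using U ultra_filt by auto
  have TF: "filt (theta m st s \<xi>)" using theta_filt[OF F ss] .
  show ?thesis unfolding is_ultrafilter_E_def
  proof (intro conjI allI impI)
    show "filt (theta m st s \<xi>)" by fact
    fix G assume G: "filt G \<and> theta m st s \<xi> \<subseteq> G"
    have sG: "s \<odot> st s \<in> G" using G theta_ss[OF F ss] by auto
    have sG': "st (st s) \<odot> st s \<in> G" using sG by simp
    have FG: "filt (theta m st (st s) G)" using theta_filt[OF _ sG'] G by auto
    have "\<xi> \<subseteq> theta m st (st s) G"
      using theta_mono[of "theta m st s \<xi>" G "st s"] G theta_inv[OF F ss] by auto
    then have "theta m st (st s) G = \<xi>" using U FG unfolding is_ultrafilter_E_def by auto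
    then show "G = theta m st s \<xi>" using theta_inv[OF _ sG'] G by auto
  qed
qed

lemma theta_D_image: assumes f: "f \<in> idem m" "f \<odot> (st s \<odot> s) = f"
  shows "theta m st s ` DD f = DD (cj s f)"
proof
  show "theta m st s ` DD f \<subseteq> DD (cj s f)"
  proof
    fix \<eta> assume "\<eta> \<in> theta m st s ` DD f"
    then obtain \<xi> where \<xi>: "ultra \<xi>" "f \<in> \<xi>" and \<eta>: "\<eta> = theta m st s \<xi>" by (auto simp: D_iff)
    have ss: "st s \<odot> s \<in> \<xi>" using \<xi> f filt_up[OF ultra_filt[OF \<xi>(1)] \<xi>(2)] 
      by (metis filt_multD ss_idem(1) ultra_filt)
    show "\<eta> \<in> DD (cj s f)" using theta_ultra[OF \<xi>(1) ss] theta_mem[OF ultra_filt[OF \<xi>(1)] \<xi>(2)] \<eta>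
      by (simp add: D_iff)
  qed
  show "DD (cj s f) \<subseteq> theta m st s ` DD f"
  proof
    fix \<eta> assume "\<eta> \<in> DD (cj s f)"
    then have \<eta>: "ultra \<eta>" "cj s f \<in> \<eta>" by (auto simp: D_iff)
    have "cj s f \<odot> (s \<odot> st s) = cj s f" using cj_mono[of f "st s \<odot> s" s] f cj_ss by simp
    then have ss: "st (st s) \<odot> st s \<in> \<eta>" using filt_up[OF ultra_filt[OF \<eta>(1)] \<eta>(2)] by simp
    let ?\<xi> = "theta m st (st s) \<eta>"
    have U: "ultra ?\<xi>" using theta_ultra[OF \<eta>(1) ss] .
    have "cj (st s) (cj s f) \<in> ?\<xi>" using theta_mem[OF ultra_filt[OF \<eta>(1)] \<eta>(2)] .
    then have "f \<in> ?\<xi>" using cj_cj[OF f(1)] f by simp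
    moreover have "theta m st s ?\<xi> = \<eta>" using theta_inv[OF ultra_filt[OF \<eta>(1)] ss] by simp
    ultimately show "\<eta> \<in> theta m st s ` DD f" using U by (auto simp: D_iff)
  qed
qed

lemma theta_inj: "inj_on (theta m st s) (DD (st s \<odot> s))"
  by (rule inj_on_inverseI[of _ "theta m st (st s)"]) (auto simp: D_iff theta_inv ultra_filt)

lemma theta_cong: assumes F: "filt \<xi>" and c: "c \<in> \<xi>" and sc: "s \<odot> c = t \<odot> c"
  shows "theta m st s \<xi> \<subseteq> theta m st t \<xi>"
proof
  fix f assume "f \<in> theta m st s \<xi>"
  then obtain e where fi: "f \<in> idem m" and e: "e \<in> \<xi>" "cj s e \<odot> f = cj s e" using theta_iff2[OF F] by auto
  have ei: "e \<in> idem m" and ci: "c \<in> idem m" using e c F filt_idem by auto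
  let ?x = "e \<odot> c"
  have "t \<odot> ?x = s \<odot> ?x"
  proof -
    have "t \<odot> ?x = t \<odot> (c \<odot> e)" using comm[OF ei ci] by simp
    also have "\<dots> = (s \<odot> c) \<odot> e" using sc by (simp add: assoc)
    also have "\<dots> = s \<odot> ?x" using comm[OF ei ci] by (simp add: assoc)
    finally show ?thesis .
  qed
  then have "cj t ?x = cj s ?x" using cj_alt ei ci by simp
  also have "cj s ?x \<odot> cj s e = cj s ?x" using cj_mono le_mult1 ei ci by simp
  finally have "cj t ?x \<odot> f = cj t ?x" using e le_trans_idem \<open>cj t ?x = cj s ?x\<close> by metis
  then show "f \<in> theta m st t \<xi>" using theta_iff2[OF F] fi filt_mult[OF F e(1) c] by blast
qed

section \<open>germs\<close>

lemma germ_iff: "p \<in> germ m st z s \<xi> \<longleftrightarrow> (\<exists>t. p = (t, \<xi>) \<and> \<xi> \<in> DD (st t \<odot> t) \<and> (\<exists>e\<in>\<xi>. s \<odot> e = t \<odot> e))"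
  unfolding germ_def by auto

lemma germ_mem: "\<xi> \<in> DD (st s \<odot> s) \<Longrightarrow> (s, \<xi>) \<in> germ m st z s \<xi>"
  unfolding germ_iff by (auto simp: D_iff intro: ultra_one)

lemma germ_d: "\<xi> \<in> DD (st s \<odot> s) \<Longrightarrow> germ_d (germ m st z s \<xi>) = \<xi>"
  unfolding germ_d_def using germ_mem[of \<xi> s] by (metis germ_iff someI snd_conv)

lemma germ_eq_aux: assumes U: "ultra \<xi>" and c: "c \<in> \<xi>" and sc: "s \<odot> c = t \<odot> c"
  shows "germ m st z s \<xi> \<subseteq> germ m st z t \<xi>"
proof
  fix p assume "p \<in> germ m st z s \<xi>"
  then obtain u e where p: "p = (u, \<xi>)" "\<xi> \<in> DD (st u \<odot> u)" and e: "e \<in> \<xi>" "s \<odot> e = u \<odot> e"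
    unfolding germ_iff by auto
  have ei: "e \<in> idem m" and ci: "c \<in> idem m" using e c U ultra_idem by auto
  have "t \<odot> (c \<odot> e) = (s \<odot> c) \<odot> e" using sc by (simp add: assoc)
  also have "\<dots> = s \<odot> (e \<odot> c)" using comm[OF ei ci] by (simp add: assoc)
  also have "\<dots> = (s \<odot> e) \<odot> c" by (simp add: assoc)
  also have "\<dots> = u \<odot> (e \<odot> c)" using e by (simp add: assoc)
  also have "\<dots> = u \<odot> (c \<odot> e)" using comm[OF ei ci] by simp
  finally have "t \<odot> (c \<odot> e) = u \<odot> (c \<odot> e)" .
  moreover have "c \<odot> e \<in> \<xi>" using ultra_filt[OF U] c e filt_mult by auto
  ultimately show "p \<in> germ m st z t \<xi>" unfolding germ_iff using p by blast
qed

lemma germ_eq: "ultra \<xi> \<Longrightarrow> c \<in> \<xi> \<Longrightarrow> s \<odot> c = t \<odot> c \<Longrightarrow> germ m st z s \<xi> = germ m st z t \<xi>"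
  using germ_eq_aux[of \<xi> c s t] germ_eq_aux[of \<xi> c t s] by auto

lemma germ_eqD: "\<xi> \<in> DD (st t \<odot> t) \<Longrightarrow> germ m st z s \<xi> = germ m st z t \<xi> \<Longrightarrow> \<exists>c\<in>\<xi>. s \<odot> c = t \<odot> c"
proof -
  assume a: "\<xi> \<in> DD (st t \<odot> t)" and b: "germ m st z s \<xi> = germ m st z t \<xi>"
  have "(t, \<xi>) \<in> germ m st z s \<xi>" using germ_mem[OF a] b by simp
  then obtain t' where "(t, \<xi>) = (t', \<xi>)" "\<exists>e\<in>\<xi>. s \<odot> e = t' \<odot> e" unfolding germ_iff by blast
  then show ?thesis by auto
qed

lemma germ_r: assumes \<xi>: "\<xi> \<in> DD (st s \<odot> s)"
  shows "germ_r m st (germ m st z s \<xi>) = theta m st s \<xi>"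
proof -
  let ?p = "SOME p. p \<in> germ m st z s \<xi>"
  have "?p \<in> germ m st z s \<xi>" using germ_mem[OF \<xi>] by (rule someI)
  then obtain t e where p: "?p = (t, \<xi>)" and e: "e \<in> \<xi>" "s \<odot> e = t \<odot> e" unfolding germ_iff by auto
  have U: "ultra \<xi>" using \<xi> by (simp add: D_iff)
  have "theta m st t \<xi> = theta m st s \<xi>"
    using theta_cong[OF ultra_filt[OF U] e(1)] e(2) by (metis subset_antisym)
  then show ?thesis unfolding germ_r_def Let_def p by simp
qed

end


context BIM begin

abbreviation "GTop \<equiv> groupoid_top m st z"
abbreviation "Bas \<equiv> {Theta m st z s U | s U. openin TT U \<and> U \<subseteq> DD (st s \<odot> s)}"

lemma openin_GT: "openin GTop W \<longleftrightarrow> generate_topology_on Bas W"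
  unfolding groupoid_top_def by (rule openin_topology_generated_by_iff)

lemma Theta_iff: "g \<in> Theta m st z s U \<longleftrightarrow> (\<exists>\<xi>\<in>U. g = germ m st z s \<xi>)"
  unfolding Theta_def by auto

lemma le_ss_D: "e \<in> idem m \<Longrightarrow> e \<odot> (st s \<odot> s) = e \<Longrightarrow> DD e \<subseteq> DD (st s \<odot> s)"
  using D_le_iff[of e "st s \<odot> s"] by simp

lemma local_basis:
  "generate_topology_on Bas W \<Longrightarrow> g \<in> W \<Longrightarrow>
    \<exists>s e. e \<in> idem m \<and> e \<odot> (st s \<odot> s) = e \<and> (\<exists>\<xi>\<in>DD e. g = germ m st z s \<xi>) \<and> Theta m st z s (DD e) \<subseteq> W"
proof (induction arbitrary: g rule: generate_topology_on.induct)
  case Empty then show ?case by simp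
next
  case (UN K)
  then obtain k where "k \<in> K" "g \<in> k" by auto
  with UN.IH[of k g] show ?case by blast
next
  case (Basis W)
  then obtain s V where W: "W = Theta m st z s V" and V: "openin TT V" "V \<subseteq> DD (st s \<odot> s)" by auto
  then obtain \<xi> where \<xi>: "\<xi> \<in> V" "g = germ m st z s \<xi>" using Basis Theta_iff by auto
  obtain e where e: "e \<in> idem m" "\<xi> \<in> DD e" "DD e \<subseteq> V" using open_basis[OF V(1) \<xi>(1)] by auto
  let ?e = "e \<odot> (st s \<odot> s)"
  have De: "DD ?e = DD e" using D_mult[OF e(1) ss_idem(1)] e V by auto
  have "?e \<odot> (st s \<odot> s) = ?e" using le_mult2[OF e(1) ss_idem(1)] .
  moreover have "Theta m st z s (DD ?e) \<subseteq> W"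
  proof
    fix h assume "h \<in> Theta m st z s (DD ?e)"
    then obtain \<eta> where \<eta>: "\<eta> \<in> DD ?e" "h = germ m st z s \<eta>" by (auto simp: Theta_iff)
    then have "\<eta> \<in> V" using De e(3) by auto
    then show "h \<in> W" unfolding W Theta_iff using \<eta>(2) by blast
  qed
  ultimately show ?case using e De \<xi> by (intro exI[of _ s] exI[of _ ?e]) auto
next
  case (Int a b)
  obtain s1 e1 \<xi>1 where 1: "e1 \<in> idem m" "e1 \<odot> (st s1 \<odot> s1) = e1" "\<xi>1 \<in> DD e1" "g = germ m st z s1 \<xi>1"
    "Theta m st z s1 (DD e1) \<subseteq> a" using Int.IH(1)[of g] Int.prems by auto
  obtain s2 e2 \<xi>2 where 2: "e2 \<in> idem m" "e2 \<odot> (st s2 \<odot> s2) = e2" "\<xi>2 \<in> DD e2" "g = germ m st z s2 \<xi>2"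
    "Theta m st z s2 (DD e2) \<subseteq> b" using Int.IH(2)[of g] Int.prems by auto
  have d1: "\<xi>1 \<in> DD (st s1 \<odot> s1)" using le_ss_D[OF 1(1,2)] 1(3) by auto
  have d2: "\<xi>2 \<in> DD (st s2 \<odot> s2)" using le_ss_D[OF 2(1,2)] 2(3) by auto
  have "\<xi>1 = \<xi>2" using germ_d[OF d1] germ_d[OF d2] 1(4) 2(4) by simp
  then obtain c where c: "c \<in> \<xi>1" "s2 \<odot> c = s1 \<odot> c" using germ_eqD[OF d1, of s2] 1(4) 2(4) by auto
  have U: "ultra \<xi>1" using 1(3) by (simp add: D_iff)
  have ci: "c \<in> idem m" using c U ultra_idem by auto
  let ?e = "e1 \<odot> e2 \<odot> c"
  have ei: "?e \<in> idem m" using 1(1) 2(1) ci by simp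
  have De: "DD ?e = DD e1 \<inter> DD e2 \<inter> DD c" using D_mult 1(1) 2(1) ci by simp
  have "DD ?e \<subseteq> DD (st s1 \<odot> s1)" using De le_ss_D[OF 1(1,2)] by auto
  then have le: "?e \<odot> (st s1 \<odot> s1) = ?e" using D_le_iff[OF ei ss_idem(1)] by simp
  have "\<xi>1 \<in> DD ?e" using De 1(3) 2(3) \<open>\<xi>1 = \<xi>2\<close> c U by (auto simp: D_iff)
  moreover have "Theta m st z s1 (DD ?e) \<subseteq> a \<inter> b"
  proof
    fix h assume "h \<in> Theta m st z s1 (DD ?e)"
    then obtain \<eta> where \<eta>: "\<eta> \<in> DD ?e" "h = germ m st z s1 \<eta>" by (auto simp: Theta_iff)
    have "\<eta> \<in> DD e1" "\<eta> \<in> DD e2" "\<eta> \<in> DD c" using \<eta>(1) De by auto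
    have "germ m st z s1 \<eta> \<in> Theta m st z s1 (DD e1)" unfolding Theta_iff using \<open>\<eta> \<in> DD e1\<close> by blast
    then have ha: "h \<in> a" using \<eta>(2) 1(5) by auto
    have "germ m st z s1 \<eta> = germ m st z s2 \<eta>"
      using germ_eq[of \<eta> c s2 s1] \<open>\<eta> \<in> DD c\<close> c by (auto simp: D_iff)
    moreover have "germ m st z s2 \<eta> \<in> Theta m st z s2 (DD e2)" unfolding Theta_iff using \<open>\<eta> \<in> DD e2\<close> by blast
    ultimately have "h \<in> b" using \<eta>(2) 2(5) by auto
    then show "h \<in> a \<inter> b" using ha by blast
  qed
  ultimately show ?case using ei le 1(4) by (intro exI[of _ s1] exI[of _ ?e]) auto
qed

lemma U0_props:
  fixes s
  defines "U0 \<equiv> Theta m st z s (DD (st s \<odot> s))"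
  shows "bisection m st z U0" "germ_d ` U0 = DD (st s \<odot> s)" "germ_r m st ` U0 = DD (s \<odot> st s)"
proof -
  have gd: "germ_d ` U0 = DD (st s \<odot> s)" unfolding U0_def Theta_def
    using germ_d by (auto simp: image_iff)
  have gr: "germ_r m st ` U0 = theta m st s ` DD (st s \<odot> s)" unfolding U0_def Theta_def
    using germ_r by (auto simp: image_iff)
  have "openin GTop U0" unfolding openin_GT U0_def
    by (rule generate_topology_on.Basis) (use open_D in blast)
  moreover have "inj_on germ_d U0"
  proof (rule inj_onI)
    fix x y assume "x \<in> U0" "y \<in> U0" "germ_d x = germ_d y"
    then obtain \<xi> \<xi>' where "\<xi> \<in> DD (st s \<odot> s)" "x = germ m st z s \<xi>" "\<xi>' \<in> DD (st s \<odot> s)" "y = germ m st z s \<xi>'"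
      "germ_d x = germ_d y" unfolding U0_def Theta_iff by blast
    then show "x = y" using germ_d by metis
  qed
  moreover have "inj_on (germ_r m st) U0"
  proof (rule inj_onI)
    fix x y assume "x \<in> U0" "y \<in> U0" "germ_r m st x = germ_r m st y"
    then obtain \<xi> \<xi>' where a: "\<xi> \<in> DD (st s \<odot> s)" "x = germ m st z s \<xi>" "\<xi>' \<in> DD (st s \<odot> s)" "y = germ m st z s \<xi>'"
      "germ_r m st x = germ_r m st y" unfolding U0_def Theta_iff by blast
    then have "theta m st s \<xi> = theta m st s \<xi>'" using germ_r by metis
    then have "\<xi> = \<xi>'" using theta_inj a unfolding inj_on_def by blast
    then show "x = y" using a by simp
  qed
  ultimately show "bisection m st z U0" unfolding bisection_def by auto
  show "germ_d ` U0 = DD (st s \<odot> s)" by fact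
  have "theta m st s ` DD (st s \<odot> s) = DD (cj s (st s \<odot> s))"
    by (rule theta_D_image) (simp_all add: idem_iff[symmetric])
  then show "germ_r m st ` U0 = DD (s \<odot> st s)" using gr cj_ss by simp
qed

end


context BIM begin

lemma germ_in_basic:
  assumes "e \<in> idem m" "e \<odot> (st s \<odot> s) = e" "\<xi> \<in> DD e"
  shows "germ m st z s \<xi> \<in> Theta m st z s (DD e)"
    "germ_d (germ m st z s \<xi>) = \<xi>" "germ_r m st (germ m st z s \<xi>) = theta m st s \<xi>"
proof -
  have d: "\<xi> \<in> DD (st s \<odot> s)" using le_ss_D[OF assms(1,2)] assms(3) by auto
  show "germ m st z s \<xi> \<in> Theta m st z s (DD e)" unfolding Theta_iff using assms(3) by blast
  show "germ_d (germ m st z s \<xi>) = \<xi>" using germ_d[OF d] .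
  show "germ_r m st (germ m st z s \<xi>) = theta m st s \<xi>" using germ_r[OF d] .
qed

lemma invariance:
  fixes \<nu> :: "'a set measure" and \<mu> :: "'a \<Rightarrow> real"
  assumes fm: "finite_measure \<nu>" and Dsets: "\<And>e. DD e \<in> sets \<nu>"
    and meas: "\<And>e. e \<in> idem m \<Longrightarrow> measure \<nu> (DD e) = \<mu> e"
    and inv: "\<And>s f. f \<in> idem m \<Longrightarrow> f \<odot> (st s \<odot> s) = f \<Longrightarrow> \<mu> (cj s f) = \<mu> f"
    and B: "bisection m st z U"
  shows "measure \<nu> (germ_r m st ` U) = measure \<nu> (germ_d ` U)"
proof (cases "U = {}")
  case True then show ?thesis by simp
next
  case False
  interpret finite_measure \<nu> by fact
  have gen: "generate_topology_on Bas U" using B unfolding bisection_def openin_GT by auto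
  have injd: "inj_on germ_d U" and injr: "inj_on (germ_r m st) U" using B unfolding bisection_def by auto
  define P where "P = {(s, e). e \<in> idem m \<and> e \<odot> (st s \<odot> s) = e \<and> Theta m st z s (DD e) \<subseteq> U}"
  have cover: "\<exists>p\<in>P. \<exists>\<xi>\<in>DD (snd p). g = germ m st z (fst p) \<xi>" if gU: "g \<in> U" for g
  proof -
    obtain s e where se: "e \<in> idem m" "e \<odot> (st s \<odot> s) = e" "\<exists>\<xi>\<in>DD e. g = germ m st z s \<xi>"
      "Theta m st z s (DD e) \<subseteq> U" using local_basis[OF gen gU] by blast
    then have "(s, e) \<in> P" unfolding P_def by simp
    then show ?thesis using se(3) by (intro bexI[of _ "(s, e)"]) auto
  qed
  have "P \<noteq> {}" using cover False by blast
  have "countable P" by (rule countableI_type)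
  define p where "p = from_nat_into P"
  define s where "s n = fst (p n)" for n
  define e where "e n = snd (p n)" for n
  have pP: "p n \<in> P" for n unfolding p_def using from_nat_into[OF \<open>P \<noteq> {}\<close>] .
  have rng: "\<exists>n. q = p n" if "q \<in> P" for q
    using range_from_nat_into[OF \<open>P \<noteq> {}\<close> \<open>countable P\<close>] that unfolding p_def by auto
  have ei: "e n \<in> idem m" and ele: "e n \<odot> (st (s n) \<odot> s n) = e n" and eU: "Theta m st z (s n) (DD (e n)) \<subseteq> U"
    for n using pP[of n] unfolding P_def s_def e_def by (auto split: prod.splits)
  define G where "G = rec_nat z (\<lambda>n g. jn g (e n))"
  have G0: "G 0 = z" and GS: "G (Suc n) = jn (G n) (e n)" for n unfolding G_def by simp_all
  have Gp: "G n \<in> idem m \<and> DD (G n) = (\<Union>i\<in>{0..<n}. DD (e i))" for n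
  proof (induction n)
    case 0 then show ?case using G0 D_z by simp
  next
    case (Suc n)
    then show ?case using GS jn_ex[of "G n" "e n"] D_jn[of "G n" "e n"] ei[of n] by (auto simp: atLeast0_lessThan_Suc)
  qed
  define f where "f n = e n \<odot> cmp (G n)" for n
  have fi: "f n \<in> idem m" for n unfolding f_def using ei cmp Gp by simp
  have Df: "DD (f n) = disjointed (\<lambda>i. DD (e i)) n" for n
  proof -
    have gi: "G n \<in> idem m" and GD: "DD (G n) = (\<Union>i\<in>{0..<n}. DD (e i))" using Gp by auto
    have "DD (f n) = DD (e n) \<inter> (XX - DD (G n))"
      unfolding f_def using D_mult[OF ei cmp(1)[OF gi]] D_cmp[OF gi] by simp
    also have "\<dots> = DD (e n) - DD (G n)" using D_sub[of "e n"] by blast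
    finally show ?thesis unfolding disjointed_def GD .
  qed
  have Dfe: "DD (f n) \<subseteq> DD (e n)" for n unfolding Df by (rule disjointed_subset)
  have fle: "f n \<odot> (st (s n) \<odot> s n) = f n" for n
  proof -
    have "DD (f n) \<subseteq> DD (st (s n) \<odot> s n)" using Dfe le_ss_D[OF ei ele] by blast
    then show ?thesis using D_le_iff[OF fi ss_idem(1)] by simp
  qed
  have fdisj: "disjoint_family (\<lambda>n. DD (f n))" unfolding Df by (rule disjoint_family_disjointed)
  have Uf: "(\<Union>n. DD (f n)) = (\<Union>n. DD (e n))" unfolding Df by (rule UN_disjointed_eq)
  have inU: "germ m st z (s n) \<xi> \<in> U" and gdn: "germ_d (germ m st z (s n) \<xi>) = \<xi>"
    and grn: "germ_r m st (germ m st z (s n) \<xi>) = theta m st (s n) \<xi>" if "\<xi> \<in> DD (e n)" for n \<xi>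
    using germ_in_basic[OF ei ele that] eU by auto
  have dU: "germ_d ` U = (\<Union>n. DD (f n))"
  proof
    show "germ_d ` U \<subseteq> (\<Union>n. DD (f n))"
    proof
      fix x assume "x \<in> germ_d ` U"
      then obtain g where g: "g \<in> U" "x = germ_d g" by auto
      then obtain q \<xi> where q: "q \<in> P" "\<xi> \<in> DD (snd q)" "g = germ m st z (fst q) \<xi>" using cover by blast
      then obtain n where "q = p n" using rng by blast
      then have "\<xi> \<in> DD (e n)" "g = germ m st z (s n) \<xi>" using q unfolding e_def s_def by auto
      then show "x \<in> (\<Union>n. DD (f n))" using gdn g Uf by auto
    qed
    show "(\<Union>n. DD (f n)) \<subseteq> germ_d ` U"
    proof
      fix \<xi> assume "\<xi> \<in> (\<Union>n. DD (f n))"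
      then obtain n where xn: "\<xi> \<in> DD (e n)" using Dfe by blast
      show "\<xi> \<in> germ_d ` U" by (rule image_eqI[where f=germ_d, OF gdn[OF xn, symmetric] inU[OF xn]])
    qed
  qed
  have thimg: "theta m st (s n) ` DD (f n) = DD (cj (s n) (f n))" for n
    using theta_D_image[OF fi fle] .
  have rU: "germ_r m st ` U = (\<Union>n. DD (cj (s n) (f n)))"
  proof
    show "germ_r m st ` U \<subseteq> (\<Union>n. DD (cj (s n) (f n)))"
    proof
      fix y assume "y \<in> germ_r m st ` U"
      then obtain g where g: "g \<in> U" "y = germ_r m st g" by auto
      have "germ_d g \<in> (\<Union>n. DD (f n))" using dU g by auto
      then obtain n where n: "germ_d g \<in> DD (f n)" by auto
      let ?\<xi> = "germ_d g"
      have xe: "?\<xi> \<in> DD (e n)" using n Dfe by auto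
      have "germ m st z (s n) ?\<xi> = g"
        using inj_onD[OF injd _ inU[OF xe] g(1)] gdn[OF xe] by simp
      then have "y = theta m st (s n) ?\<xi>" using grn[OF xe] g by simp
      then have "y \<in> theta m st (s n) ` DD (f n)" using n by (auto intro: imageI)
      then have "y \<in> DD (cj (s n) (f n))" using thimg[of n] by simp
      then show "y \<in> (\<Union>n. DD (cj (s n) (f n)))" by blast
    qed
    show "(\<Union>n. DD (cj (s n) (f n))) \<subseteq> germ_r m st ` U"
    proof
      fix y assume "y \<in> (\<Union>n. DD (cj (s n) (f n)))"
      then obtain n where "y \<in> DD (cj (s n) (f n))" by auto
      then have "y \<in> theta m st (s n) ` DD (f n)" using thimg[of n] by simp
      then obtain \<xi> where \<xi>: "\<xi> \<in> DD (f n)" "y = theta m st (s n) \<xi>" by auto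
      then have xe: "\<xi> \<in> DD (e n)" using Dfe by auto
      show "y \<in> germ_r m st ` U" using \<xi>(2) by (rule image_eqI[where f="germ_r m st", OF trans[OF _ grn[OF xe, symmetric]] inU[OF xe]])
    qed
  qed
  have rdisj: "disjoint_family (\<lambda>n. DD (cj (s n) (f n)))"
    unfolding disjoint_family_on_def
  proof (intro ballI impI)
    fix n k :: nat assume nk: "n \<noteq> k"
    show "DD (cj (s n) (f n)) \<inter> DD (cj (s k) (f k)) = {}"
    proof (rule ccontr)
      assume "DD (cj (s n) (f n)) \<inter> DD (cj (s k) (f k)) \<noteq> {}"
      then obtain y where "y \<in> DD (cj (s n) (f n))" "y \<in> DD (cj (s k) (f k))" by auto
      then have "y \<in> theta m st (s n) ` DD (f n)" "y \<in> theta m st (s k) ` DD (f k)" using thimg by simp_all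
      then obtain \<xi> \<xi>' where a: "\<xi> \<in> DD (f n)" "y = theta m st (s n) \<xi>"
        and b: "\<xi>' \<in> DD (f k)" "y = theta m st (s k) \<xi>'" by auto
      have xe: "\<xi> \<in> DD (e n)" and xe': "\<xi>' \<in> DD (e k)" using a b Dfe by auto
      have "germ m st z (s n) \<xi> = germ m st z (s k) \<xi>'"
        using inj_onD[OF injr _ inU[OF xe] inU[OF xe']] grn[OF xe] grn[OF xe'] a(2) b(2) by simp
      then have "germ_d (germ m st z (s n) \<xi>) = germ_d (germ m st z (s k) \<xi>')" by simp
      then have "\<xi> = \<xi>'" using gdn[OF xe] gdn[OF xe'] by simp
      then have "\<xi> \<in> DD (f n) \<inter> DD (f k)" using a(1) b(1) by simp
      moreover have "DD (f n) \<inter> DD (f k) = {}" using fdisj nk unfolding disjoint_family_on_def by simp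
      ultimately show False by simp
    qed
  qed
  have s1: "(\<lambda>n. measure \<nu> (DD (f n))) sums measure \<nu> (germ_d ` U)"
    unfolding dU by (rule finite_measure_UNION) (use Dsets fdisj in auto)
  have s2: "(\<lambda>n. measure \<nu> (DD (cj (s n) (f n)))) sums measure \<nu> (germ_r m st ` U)"
    unfolding rU by (rule finite_measure_UNION) (use Dsets rdisj in auto)
  have "measure \<nu> (DD (cj (s n) (f n))) = measure \<nu> (DD (f n))" for n
    using meas fi inv fle cj_idem by simp
  then show ?thesis using s1 s2 sums_unique2 by simp
qed

end


context BIM begin

lemma opens_sub: "{U. openin TT U} \<subseteq> Pow XX"
  using openin_subset topspace_TT by auto

lemma rangeD_sub: "range DD \<subseteq> Pow XX" using D_sub by auto

lemma sig_eq: "sigma_sets XX {U. openin TT U} = sigma_sets XX (range DD)"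
proof
  show "sigma_sets XX (range DD) \<subseteq> sigma_sets XX {U. openin TT U}"
    by (rule sigma_sets_mono') (auto intro: open_D)
  show "sigma_sets XX {U. openin TT U} \<subseteq> sigma_sets XX (range DD)"
  proof (rule sigma_sets_mono, rule subsetI)
    fix U assume "U \<in> {U. openin TT U}"
    then have U: "U = \<Union>(DD ` {e \<in> idem m. DD e \<subseteq> U})" using open_Union_D by auto
    have "\<Union>(DD ` {e \<in> idem m. DD e \<subseteq> U}) \<in> sigma_sets XX (range DD)"
      by (rule sigma_sets_UNION) (auto intro: countable_image countableI_type)
    then show "U \<in> sigma_sets XX (range DD)" using U by simp
  qed
qed

lemma sets_borel: "sets (borel_of_top TT) = sigma_sets XX (range DD)"
  unfolding borel_of_top_def topspace_TT using sets_measure_of[OF opens_sub] sig_eq by simp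

lemma regularity:
  fixes \<nu> :: "'a set measure"
  assumes fm: "finite_measure \<nu>" and sp: "space \<nu> = XX" and sets: "sets \<nu> = sigma_sets XX (range DD)"
    and A: "A \<in> sets \<nu>"
  shows "measure \<nu> A = Inf {measure \<nu> U | U. openin TT U \<and> A \<subseteq> U} \<and>
         measure \<nu> A = Sup {measure \<nu> K | K. compactin TT K \<and> K \<subseteq> A}"
proof -
  interpret finite_measure \<nu> by fact
  have openS: "U \<in> sets \<nu>" if "openin TT U" for U
  proof -
    have "U \<in> sigma_sets XX {U. openin TT U}" by (rule sigma_sets.Basic) (simp add: that)
    then show ?thesis using sig_eq sets by simp
  qed
  have closedS: "K \<in> sets \<nu>" if "closedin TT K" for K
  proof -
    have "openin TT (XX - K)" using that topspace_TT by (simp add: closedin_def)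
    then have "space \<nu> - (XX - K) \<in> sets \<nu>" using openS by auto
    moreover have "K \<subseteq> XX" using that closedin_subset topspace_TT by auto
    ultimately show ?thesis using sp by (simp add: Diff_Diff_Int inf_absorb2)
  qed
  define good where "good A \<longleftrightarrow> (\<forall>\<epsilon>>0. \<exists>U K. openin TT U \<and> closedin TT K \<and> K \<subseteq> A \<and> A \<subseteq> U \<and>
      measure \<nu> U - measure \<nu> K < \<epsilon>)" for A
  have G: "good B" if "B \<in> sigma_sets XX (range DD)" for B
    using that
  proof (induction rule: sigma_sets.induct)
    case (Basic a)
    then obtain e where "a = DD e" by auto
    show ?case unfolding good_def
    proof (intro allI impI)
      fix \<epsilon> :: real assume "\<epsilon> > 0"
      then show "\<exists>U K. openin TT U \<and> closedin TT K \<and> K \<subseteq> a \<and> a \<subseteq> U \<and> measure \<nu> U - measure \<nu> K < \<epsilon>"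
        using open_D[of e] closed_D[of e] \<open>a = DD e\<close> by (intro exI[of _ a]) simp
    qed
  next
    case Empty
    then show ?case unfolding good_def by (intro allI impI exI[of _ "{}"]) auto
  next
    case (Compl a)
    have asub: "a \<subseteq> XX" using Compl(1) sigma_sets_into_sp[OF rangeD_sub] by auto
    show ?case unfolding good_def
    proof (intro allI impI)
      fix \<epsilon> :: real assume "\<epsilon> > 0"
      then obtain U K where UK: "openin TT U" "closedin TT K" "K \<subseteq> a" "a \<subseteq> U" "measure \<nu> U - measure \<nu> K < \<epsilon>"
        using Compl(2)[unfolded good_def, rule_format, OF \<open>\<epsilon> > 0\<close>] by blast
      have "openin TT (XX - K)" using UK(2) topspace_TT by (metis openin_diff openin_topspace)
      moreover have "closedin TT (XX - U)" using UK(1) topspace_TT by (metis closedin_diff closedin_topspace)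
      moreover have "XX - U \<subseteq> XX - a" "XX - a \<subseteq> XX - K" using UK by auto
      moreover have "measure \<nu> (XX - K) - measure \<nu> (XX - U) = measure \<nu> U - measure \<nu> K"
        using finite_measure_compl[OF openS[OF UK(1)]] finite_measure_compl[OF closedS[OF UK(2)]] sp by simp
      ultimately show "\<exists>U K. openin TT U \<and> closedin TT K \<and> K \<subseteq> XX - a \<and> XX - a \<subseteq> U \<and> measure \<nu> U - measure \<nu> K < \<epsilon>"
        using UK(5) by (intro exI[of _ "XX - K"] exI[of _ "XX - U"]) simp
    qed
  next
    case (Union a)
    have aS: "a i \<in> sets \<nu>" for i using Union(1) sets by auto
    show ?case unfolding good_def
    proof (intro allI impI)
      fix \<epsilon> :: real assume ep: "\<epsilon> > 0"
      define \<delta> where "\<delta> i = \<epsilon> / 4 * (1/2) ^ i" for i :: nat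
      have dpos: "\<delta> i > 0" for i using ep by (simp add: \<delta>_def)
      have dsum: "\<delta> sums (\<epsilon> / 2)"
      proof -
        have "(\<lambda>i. (1/2::real) ^ i) sums 2" using geometric_sums[of "1/2::real"] by simp
        from sums_mult[OF this, of "\<epsilon>/4"] show ?thesis by (simp add: \<delta>_def[abs_def])
      qed
      have "\<exists>p. openin TT (fst p) \<and> closedin TT (snd p) \<and> snd p \<subseteq> a i \<and> a i \<subseteq> fst p \<and>
          measure \<nu> (fst p) - measure \<nu> (snd p) < \<delta> i" for i
      proof -
        obtain U K where "openin TT U" "closedin TT K" "K \<subseteq> a i" "a i \<subseteq> U" "measure \<nu> U - measure \<nu> K < \<delta> i"
          using Union(2)[of i, unfolded good_def, rule_format, OF dpos[of i]] by blast
        then show ?thesis by (intro exI[of _ "(U, K)"]) simp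
      qed
      then have "\<forall>i. \<exists>p. openin TT (fst p) \<and> closedin TT (snd p) \<and> snd p \<subseteq> a i \<and> a i \<subseteq> fst p \<and>
          measure \<nu> (fst p) - measure \<nu> (snd p) < \<delta> i" by blast
      from choice[OF this] obtain p where p: "\<And>i. openin TT (fst (p i)) \<and> closedin TT (snd (p i)) \<and> snd (p i) \<subseteq> a i \<and> a i \<subseteq> fst (p i) \<and>
          measure \<nu> (fst (p i)) - measure \<nu> (snd (p i)) < \<delta> i"
        by blast
      define U where "U i = fst (p i)" for i
      define K where "K i = snd (p i)" for i
      have Uo: "openin TT (U i)" and Kc: "closedin TT (K i)" and Ka: "K i \<subseteq> a i" and aU: "a i \<subseteq> U i"
        and UKd: "measure \<nu> (U i) - measure \<nu> (K i) < \<delta> i" for i using p[of i] unfolding U_def K_def by auto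
      have US: "U i \<in> sets \<nu>" and KS: "K i \<in> sets \<nu>" for i using openS[OF Uo] closedS[OF Kc] .
      let ?A = "\<Union>i. a i"
      define B where "B n = (\<Union>i\<in>{..<n}. a i)" for n
      have AS: "?A \<in> sets \<nu>" using aS by auto
      have BS: "B n \<in> sets \<nu>" for n unfolding B_def using aS by auto
      have "incseq B" by (rule incseq_SucI) (auto simp: B_def lessThan_Suc)
      moreover have "(\<Union>n. B n) = ?A" unfolding B_def by auto
      ultimately have lim: "(\<lambda>n. measure \<nu> (B n)) \<longlonglongrightarrow> measure \<nu> ?A"
        using finite_Lim_measure_incseq[of B] BS by auto
      obtain N where N: "norm (measure \<nu> (B N) - measure \<nu> ?A) < \<epsilon> / 2"
        using LIMSEQ_D[OF lim, of "\<epsilon>/2"] ep by auto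
      let ?U = "\<Union>i. U i"
      let ?K = "\<Union>i\<in>{..<N}. K i"
      have Uo': "openin TT ?U" using Uo by auto
      have Kc': "closedin TT ?K" by (rule closedin_Union) (auto intro: Kc)
      have KB: "?K \<subseteq> B N" using Ka unfolding B_def by auto
      have BA: "B N \<subseteq> ?A" unfolding B_def by auto
      have AU: "?A \<subseteq> ?U" using aU by auto
      have US': "?U \<in> sets \<nu>" using US by auto
      have KS': "?K \<in> sets \<nu>" using KS by auto
      have cov: "?U - ?K \<subseteq> (\<Union>i. U i - K i) \<union> (?A - B N)"
      proof
        fix x assume x: "x \<in> ?U - ?K"
        show "x \<in> (\<Union>i. U i - K i) \<union> (?A - B N)"
        proof (cases "x \<in> B N")
          case True
          then obtain i where "i < N" "x \<in> a i" unfolding B_def by auto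
          then have "x \<in> U i - K i" using x aU by auto
          then show ?thesis by auto
        next
          case False
          show ?thesis
          proof (cases "x \<in> ?A")
            case True then show ?thesis using False by auto
          next
            case nA: False
            obtain j where "x \<in> U j" using x by auto
            moreover have "x \<notin> K j" using nA Ka by auto
            ultimately show ?thesis by auto
          qed
        qed
      qed
      have le: "measure \<nu> (U i - K i) \<le> \<delta> i" for i
      proof -
        have "K i \<subseteq> U i" using Ka aU by blast
        then show ?thesis using finite_measure_Diff[OF US KS] UKd[of i] by simp
      qed
      have sd: "summable \<delta>" using dsum by (rule sums_summable)
      have sm: "summable (\<lambda>i. measure \<nu> (U i - K i))"
        by (rule summable_comparison_test'[OF sd, of 0]) (simp add: le)
      have sub: "measure \<nu> (\<Union>i. U i - K i) \<le> (\<Sum>i. measure \<nu> (U i - K i))"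
        by (rule finite_measure_subadditive_countably[OF _ sm]) (use US KS in auto)
      have "(\<Sum>i. measure \<nu> (U i - K i)) \<le> suminf \<delta>"
        by (rule suminf_le[OF le sm sd])
      then have sle: "(\<Sum>i. measure \<nu> (U i - K i)) \<le> \<epsilon> / 2" using dsum by (simp add: sums_iff)
      from cov have "measure \<nu> (?U - ?K) \<le> measure \<nu> ((\<Union>i. U i - K i) \<union> (?A - B N))"
        using US KS AS BS by (intro finite_measure_mono) auto
      also have "\<dots> \<le> measure \<nu> (\<Union>i. U i - K i) + measure \<nu> (?A - B N)"
        using US KS AS BS by (intro measure_Un_le) auto
      also have "\<dots> \<le> \<epsilon> / 2 + measure \<nu> (?A - B N)" using sub sle by simp
      finally have 1: "measure \<nu> (?U - ?K) \<le> \<epsilon> / 2 + measure \<nu> (?A - B N)" .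
      have 2: "measure \<nu> (?A - B N) < \<epsilon> / 2"
      proof -
        have "measure \<nu> ?A - measure \<nu> (B N) < \<epsilon> / 2" using N unfolding real_norm_def abs_less_iff by linarith
        then show ?thesis using finite_measure_Diff[OF AS BS BA] by simp
      qed
      have 3: "measure \<nu> (?U - ?K) = measure \<nu> ?U - measure \<nu> ?K"
        using finite_measure_Diff[OF US' KS'] KB BA AU by auto
      have "measure \<nu> ?U - measure \<nu> ?K < \<epsilon>" using 1 2 3 by simp
      then show "\<exists>U K. openin TT U \<and> closedin TT K \<and> K \<subseteq> ?A \<and> ?A \<subseteq> U \<and> measure \<nu> U - measure \<nu> K < \<epsilon>"
        using Uo' Kc' KB BA AU by blast
    qed
  qed
  have gA: "good A" using G A sets by auto
  have Asub: "A \<subseteq> XX" using A sets.sets_into_space sp by auto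
  let ?S = "{measure \<nu> U | U. openin TT U \<and> A \<subseteq> U}"
  have "XX \<in> {U. openin TT U \<and> A \<subseteq> U}" using Asub topspace_TT openin_topspace[of TT] by auto
  then have Sne: "?S \<noteq> {}" by blast
  have Sbdd: "bdd_below ?S" by (rule bdd_belowI[of _ 0]) (auto simp: measure_nonneg)
  have inf1: "measure \<nu> A \<le> Inf ?S"
  proof (rule cInf_greatest[OF Sne])
    fix x assume "x \<in> ?S"
    then obtain U where "x = measure \<nu> U" "openin TT U" "A \<subseteq> U" by blast
    then show "measure \<nu> A \<le> x" using finite_measure_mono[OF _ openS] by simp
  qed
  have inf2: "Inf ?S \<le> measure \<nu> A"
  proof (rule field_le_epsilon)
    fix \<epsilon> :: real assume "\<epsilon> > 0"
    then obtain U K where UK: "openin TT U" "closedin TT K" "K \<subseteq> A" "A \<subseteq> U" "measure \<nu> U - measure \<nu> K < \<epsilon>"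
      using gA[unfolded good_def, rule_format, OF \<open>\<epsilon> > 0\<close>] by blast
    have "measure \<nu> K \<le> measure \<nu> A" using UK(3) A by (rule finite_measure_mono)
    moreover have "measure \<nu> U \<in> ?S" using UK(1,4) by blast
    then have "Inf ?S \<le> measure \<nu> U" by (rule cInf_lower[OF _ Sbdd])
    ultimately show "Inf ?S \<le> measure \<nu> A + \<epsilon>" using UK(5) by simp
  qed
  let ?T = "{measure \<nu> K | K. compactin TT K \<and> K \<subseteq> A}"
  have Tne: "?T \<noteq> {}" using compactin_empty by blast
  have Tle: "measure \<nu> K \<le> measure \<nu> A" if "K \<subseteq> A" for K
  proof (cases "K \<in> sets \<nu>")
    case True then show ?thesis using finite_measure_mono[OF that A] by simp
  next
    case False then show ?thesis using measure_notin_sets[OF False] by simp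
  qed
  have Tle': "x \<le> measure \<nu> A" if "x \<in> ?T" for x using that Tle by blast
  have Tbdd: "bdd_above ?T" by (rule bdd_aboveI[of _ "measure \<nu> A"]) (rule Tle')
  have sup1: "Sup ?T \<le> measure \<nu> A" by (rule cSup_least[OF Tne]) (rule Tle')
  have sup2: "measure \<nu> A \<le> Sup ?T"
  proof (rule field_le_epsilon)
    fix \<epsilon> :: real assume "\<epsilon> > 0"
    then obtain U K where UK: "openin TT U" "closedin TT K" "K \<subseteq> A" "A \<subseteq> U" "measure \<nu> U - measure \<nu> K < \<epsilon>"
      using gA[unfolded good_def, rule_format, OF \<open>\<epsilon> > 0\<close>] by blast
    have "measure \<nu> A \<le> measure \<nu> U" using UK(4) openS[OF UK(1)] by (rule finite_measure_mono)
    moreover have "measure \<nu> K \<in> ?T" using UK(2,3) closed_compact by blast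
    then have "measure \<nu> K \<le> Sup ?T" by (rule cSup_upper[OF _ Tbdd])
    ultimately show "measure \<nu> A \<le> Sup ?T + \<epsilon>" using UK(5) by simp
  qed
  show ?thesis using inf1 inf2 sup1 sup2 by simp
qed

end


context BIM begin

lemma IM_props:
  assumes "\<nu> \<in> IM m st z"
  shows "space \<nu> = XX" "sets \<nu> = sigma_sets XX (range DD)" "prob_space \<nu>"
    "\<And>U. bisection m st z U \<Longrightarrow> measure \<nu> (germ_r m st ` U) = measure \<nu> (germ_d ` U)"
  using assms unfolding IM_def regular_borel_prob_def by (auto simp: topspace_TT sets_borel)

lemma D_in_sets: "sets \<nu> = sigma_sets XX (range DD) \<Longrightarrow> DD e \<in> sets \<nu>"
  by auto

lemma forward: assumes nu: "\<nu> \<in> IM m st z" shows "eta m st z \<nu> \<in> inv_means m st one z"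
proof -
  note P = IM_props[OF nu]
  interpret prob_space \<nu> by (rule P(3))
  have DS: "DD e \<in> sets \<nu>" for e using D_in_sets[OF P(2)] .
  have etaD: "eta m st z \<nu> e = measure \<nu> (DD e)" if "e \<in> idem m" for e
    using that by (simp add: eta_def)
  show ?thesis unfolding inv_means_def
  proof (intro CollectI conjI allI ballI impI)
    fix e assume "e \<notin> idem m" then show "eta m st z \<nu> e = 0" by (simp add: eta_def)
  next
    fix e assume "e \<in> idem m" then show "eta m st z \<nu> e \<ge> 0" by (simp add: eta_def)
  next
    show "eta m st z \<nu> one = 1" using etaD[OF one_idem] D_one P(1) prob_space by simp
  next
    fix s
    have "measure \<nu> (DD (st s \<odot> s)) = measure \<nu> (DD (s \<odot> st s))"
      using P(4)[OF U0_props(1)[of s]] U0_props(2,3)[of s] by simp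
    then show "eta m st z \<nu> (st s \<odot> s) = eta m st z \<nu> (s \<odot> st s)" using etaD by simp
  next
    fix e f assume e: "e \<in> idem m" and f: "f \<in> idem m" and ef: "e \<odot> f = z"
    have j: "join m st {e, f} = jn e f" by (simp add: jn_def)
    have "DD e \<inter> DD f = {}" using D_mult[OF e f] ef D_z by simp
    then have "measure \<nu> (DD e \<union> DD f) = measure \<nu> (DD e) + measure \<nu> (DD f)"
      using finite_measure_Union DS by simp
    then show "eta m st z \<nu> (join m st {e, f}) = eta m st z \<nu> e + eta m st z \<nu> f"
      unfolding j using etaD e f jn_ex(1)[OF e f] D_jn[OF e f] by simp
  qed
qed

lemma inj_eta: "inj_on (eta m st z) (IM m st z)"
proof (rule inj_onI)
  fix \<nu>1 \<nu>2 assume n1: "\<nu>1 \<in> IM m st z" and n2: "\<nu>2 \<in> IM m st z" and eq: "eta m st z \<nu>1 = eta m st z \<nu>2"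
  note P1 = IM_props[OF n1] and P2 = IM_props[OF n2]
  interpret p1: prob_space \<nu>1 by (rule P1(3))
  interpret p2: prob_space \<nu>2 by (rule P2(3))
  show "\<nu>1 = \<nu>2"
  proof (rule measure_eqI_generator_eq[where E="range DD" and \<Omega>=XX and A="\<lambda>_. XX"])
    show "Int_stable (range DD)"
    proof (rule Int_stableI)
      fix a b assume "a \<in> range DD" "b \<in> range DD"
      then obtain e f where ab: "a = DD e" "b = DD f" by auto
      show "a \<inter> b \<in> range DD"
      proof (cases "e \<in> idem m \<and> f \<in> idem m")
        case True then show ?thesis using ab D_mult by auto
      next
        case False
        then have "a \<inter> b = DD z" using ab D_nonidem D_z by auto
        then show ?thesis by simp
      qed
    qed
    show "range DD \<subseteq> Pow XX" by (rule rangeD_sub)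
    fix X assume "X \<in> range DD"
    then obtain e where X: "X = DD e" by auto
    show "emeasure \<nu>1 X = emeasure \<nu>2 X"
    proof (cases "e \<in> idem m")
      case True
      then have "measure \<nu>1 (DD e) = measure \<nu>2 (DD e)" using eq by (metis eta_def)
      then show ?thesis using X p1.emeasure_eq_measure p2.emeasure_eq_measure by simp
    next
      case False then show ?thesis using X D_nonidem by simp
    qed
  next
    show "sets \<nu>1 = sigma_sets XX (range DD)" by (rule P1(2))
    show "sets \<nu>2 = sigma_sets XX (range DD)" by (rule P2(2))
    show "range (\<lambda>_. XX) \<subseteq> range DD" using D_one by auto
    show "(\<Union>i. XX) = XX" by simp
    show "emeasure \<nu>1 XX \<noteq> \<infinity>" for i :: nat by simp
  qed
qed

lemma ss_of: assumes f: "f \<in> idem m" and le: "f \<odot> (st s \<odot> s) = f"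
  shows "st (s \<odot> f) \<odot> (s \<odot> f) = f" "(s \<odot> f) \<odot> st (s \<odot> f) = cj s f"
proof -
  have st: "st (s \<odot> f) = f \<odot> st s" using st_mult f by simp
  have "f \<odot> st s \<odot> (s \<odot> f) = (f \<odot> (st s \<odot> s)) \<odot> f" by (simp add: assoc)
  then show "st (s \<odot> f) \<odot> (s \<odot> f) = f" using st le f by (simp add: idem_iff)
  have "(s \<odot> f) \<odot> (f \<odot> st s) = s \<odot> ((f \<odot> f) \<odot> st s)" by (simp add: assoc)
  then show "(s \<odot> f) \<odot> st (s \<odot> f) = cj s f" using st f by (simp add: idem_iff cj_def)
qed

lemma affine:
  assumes "\<nu>1 \<in> IM m st z" "\<nu>2 \<in> IM m st z" "\<nu> \<in> IM m st z"
    and mix: "\<forall>A\<in>sets \<nu>. measure \<nu> A = t * measure \<nu>1 A + (1 - t) * measure \<nu>2 A"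
  shows "eta m st z \<nu> = (\<lambda>e. t * eta m st z \<nu>1 e + (1 - t) * eta m st z \<nu>2 e)"
proof
  fix e
  have "DD e \<in> sets \<nu>" using D_in_sets[OF IM_props(2)[OF assms(3)]] .
  then show "eta m st z \<nu> e = t * eta m st z \<nu>1 e + (1 - t) * eta m st z \<nu>2 e"
    using mix by (simp add: eta_def)
qed

end


context BIM begin

lemma construct:
  assumes mu: "\<mu> \<in> inv_means m st one z"
  shows "\<exists>\<nu>\<in>IM m st z. eta m st z \<nu> = \<mu>"
proof -
  have \<mu>0: "\<mu> e = 0" if "e \<notin> idem m" for e using mu that unfolding inv_means_def by auto
  have \<mu>nn: "\<mu> e \<ge> 0" if "e \<in> idem m" for e using mu that unfolding inv_means_def by auto
  have \<mu>1: "\<mu> one = 1" using mu unfolding inv_means_def by auto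
  have \<mu>inv: "\<mu> (st s \<odot> s) = \<mu> (s \<odot> st s)" for s using mu unfolding inv_means_def by auto
  have \<mu>add: "\<mu> (jn e f) = \<mu> e + \<mu> f" if "e \<in> idem m" "f \<in> idem m" "e \<odot> f = z" for e f
    using mu that unfolding inv_means_def jn_def by auto
  have \<mu>z: "\<mu> z = 0" using \<mu>add[of z z] jn_z[of z] by simp
  have \<mu>cj: "\<mu> (cj s f) = \<mu> f" if "f \<in> idem m" "f \<odot> (st s \<odot> s) = f" for s f
    using \<mu>inv[of "s \<odot> f"] ss_of[OF that] by simp
  define f0 where "f0 A = ennreal (\<mu> (THE e. e \<in> idem m \<and> DD e = A))" for A
  have f0D: "f0 (DD e) = ennreal (\<mu> e)" if "e \<in> idem m" for e
  proof -
    have "(THE e'. e' \<in> idem m \<and> DD e' = DD e) = e"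
      by (rule the_equality) (use that D_inj in auto)
    then show ?thesis by (simp add: f0_def)
  qed
  have f0E: "f0 {} = 0" using f0D[of z] D_z \<mu>z by simp
  have rD: "\<exists>e\<in>idem m. A = DD e" if rA: "A \<in> range DD" for A
  proof -
    obtain e where A: "A = DD e" using rA by auto
    show ?thesis
    proof (cases "e \<in> idem m")
      case True then show ?thesis using A by auto
    next
      case False then show ?thesis using A D_nonidem D_z by (intro bexI[of _ z]) auto
    qed
  qed
  have alg: "algebra XX (range DD)" unfolding algebra_iff_Un
  proof (intro conjI ballI)
    show "range DD \<subseteq> Pow XX" by (rule rangeD_sub)
    have "DD z \<in> range DD" by simp
    then show "{} \<in> range DD" using D_z by simp
  next
    fix a assume "a \<in> range DD"
    from rD[OF this] obtain e where "e \<in> idem m" "a = DD e" by blast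
    moreover have "DD (cmp e) \<in> range DD" by simp
    ultimately show "XX - a \<in> range DD" using D_cmp by simp
  next
    fix a b assume ra: "a \<in> range DD" and rb: "b \<in> range DD"
    from rD[OF ra] obtain e where "e \<in> idem m" "a = DD e" by blast
    moreover from rD[OF rb] obtain f where "f \<in> idem m" "b = DD f" by blast
    moreover have "DD (jn e f) \<in> range DD" by simp
    ultimately show "a \<union> b \<in> range DD" using D_jn by simp
  qed
  interpret algebra XX "range DD" by (rule alg)
  have pos: "positive (range DD) f0" unfolding positive_def using f0E by simp
  have add: "additive (range DD) f0" unfolding additive_def
  proof (intro ballI impI)
    fix a b assume ra: "a \<in> range DD" and rb: "b \<in> range DD" and dis: "a \<inter> b = {}"
    from rD[OF ra] obtain e where e: "e \<in> idem m" "a = DD e" by blast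
    from rD[OF rb] obtain f where f: "f \<in> idem m" "b = DD f" by blast
    have "DD (e \<odot> f) = {}" using D_mult[OF e(1) f(1)] dis e f by simp
    then have ef: "e \<odot> f = z" using D_empty_iff e f by simp
    have "f0 (a \<union> b) = f0 (DD (jn e f))" using D_jn[OF e(1) f(1)] e f by simp
    also have "\<dots> = ennreal (\<mu> e + \<mu> f)" using f0D jn_ex(1)[OF e(1) f(1)] \<mu>add[OF e(1) f(1) ef] by simp
    also have "\<dots> = f0 a + f0 b" using f0D e f \<mu>nn by (simp add: ennreal_plus)
    finally show "f0 (a \<union> b) = f0 a + f0 b" .
  qed
  have fin: "f0 A \<noteq> \<infinity>" if "A \<in> range DD" for A by (simp add: f0_def)
  have cont: "(\<lambda>i. f0 (A i)) \<longlonglongrightarrow> 0"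
    if A: "range A \<subseteq> range DD" and dec: "decseq A" and empty: "(\<Inter>i. A i) = {}" for A
  proof -
    have AX: "A i \<subseteq> XX" for i
    proof -
      have "A i \<in> range DD" using A by blast
      then show ?thesis using rangeD_sub by blast
    qed
    have op: "openin TT (XX - A i)" for i
    proof -
      have "A i \<in> range DD" using A by blast
      from rD[OF this] obtain e where "e \<in> idem m" "A i = DD e" by blast
      then show ?thesis using D_cmp open_D[of "cmp e"] by simp
    qed
    have cov: "topspace TT \<subseteq> \<Union>(range (\<lambda>i. XX - A i))"
      unfolding topspace_TT using empty by auto
    have "(\<forall>U\<in>range (\<lambda>i. XX - A i). openin TT U) \<and> topspace TT \<subseteq> \<Union>(range (\<lambda>i. XX - A i))"
      using op cov by auto
    from compact_TT[unfolded compact_space_alt, rule_format, OF this]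
    obtain F where F: "finite F" "F \<subseteq> range (\<lambda>i. XX - A i)" "topspace TT \<subseteq> \<Union>F"
      by blast
    obtain I where I: "finite I" "F = (\<lambda>i. XX - A i) ` I"
      using finite_subset_image[OF F(1,2)] by auto
    obtain N where N: "\<forall>i\<in>I. i \<le> N" using I(1) finite_nat_set_iff_bounded_le by auto
    have AN: "A N = {}"
    proof (rule ccontr)
      assume "A N \<noteq> {}"
      then obtain \<xi> where \<xi>: "\<xi> \<in> A N" by auto
      then have "\<xi> \<in> topspace TT" using AX topspace_TT by auto
      then obtain i where i: "i \<in> I" "\<xi> \<notin> A i" using F(3) I(2) by auto
      have "A N \<subseteq> A i" using dec N i(1) unfolding decseq_def by auto
      then show False using \<xi> i by auto
    qed
    have "eventually (\<lambda>n. f0 (A n) = 0) sequentially"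
    proof (rule eventually_sequentiallyI[of N])
      fix n assume "N \<le> n"
      then have "A n \<subseteq> A N" using dec unfolding decseq_def by auto
      then show "f0 (A n) = 0" using AN f0E by simp
    qed
    then show ?thesis by (rule tendsto_eventually)
  qed
  obtain \<mu>2 where \<mu>2: "\<forall>s\<in>range DD. \<mu>2 s = f0 s" and ms: "measure_space XX (sigma_sets XX (range DD)) \<mu>2"
    using caratheodory_empty_continuous[OF pos add fin cont] by blast
  have sa: "sigma_algebra XX (sigma_sets XX (range DD))" and pos2: "positive (sigma_sets XX (range DD)) \<mu>2"
    and ca2: "countably_additive (sigma_sets XX (range DD)) \<mu>2" using ms unfolding measure_space_def by auto
  define \<nu> where "\<nu> = measure_of XX (sigma_sets XX (range DD)) \<mu>2"
  have sp: "space \<nu> = XX" unfolding \<nu>_def using sigma_algebra.space_measure_of_eq[OF sa] .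
  have sets: "sets \<nu> = sigma_sets XX (range DD)" unfolding \<nu>_def using sigma_algebra.sets_measure_of_eq[OF sa] .
  have emD: "emeasure \<nu> (DD e) = ennreal (\<mu> e)" if "e \<in> idem m" for e
  proof -
    have "DD e \<in> sigma_sets XX (range DD)" by auto
    then have "emeasure \<nu> (DD e) = \<mu>2 (DD e)" unfolding \<nu>_def using emeasure_measure_of_sigma[OF sa pos2 ca2] by blast
    then show ?thesis using \<mu>2 f0D[OF that] by simp
  qed
  have prob: "prob_space \<nu>"
    by (rule prob_spaceI) (use sp D_one emD[OF one_idem] \<mu>1 in simp)
  interpret prob_space \<nu> by (rule prob)
  have measD: "measure \<nu> (DD e) = \<mu> e" if "e \<in> idem m" for e
    using emD[OF that] \<mu>nn[OF that] by (simp add: measure_def)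
  have etaeq: "eta m st z \<nu> = \<mu>"
  proof
    fix e show "eta m st z \<nu> e = \<mu> e"
      by (cases "e \<in> idem m") (simp_all add: eta_def measD \<mu>0)
  qed
  have fm: "finite_measure \<nu>" by (rule finite_measure_axioms)
  have Ds: "\<And>e. DD e \<in> sets \<nu>" using sets by auto
  have "\<nu> \<in> IM m st z" unfolding IM_def regular_borel_prob_def
  proof (intro CollectI conjI allI impI ballI)
    show "space \<nu> = topspace TT" using sp topspace_TT by simp
    show "sets \<nu> = sets (borel_of_top TT)" using sets sets_borel by simp
    show "prob_space \<nu>" by (rule prob)
  next
    fix A assume "A \<in> sets \<nu>"
    note R = regularity[OF fm sp sets this]
    show "measure \<nu> A = Inf {measure \<nu> U | U. openin TT U \<and> A \<subseteq> U}" using R by simp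
    show "measure \<nu> A = Sup {measure \<nu> K | K. compactin TT K \<and> K \<subseteq> A}" using R by simp
  next
    fix U assume "bisection m st z U"
    then show "measure \<nu> (germ_r m st ` U) = measure \<nu> (germ_d ` U)"
      by (intro invariance[where \<nu>=\<nu> and \<mu>=\<mu>, OF fm Ds]) (auto simp: measD \<mu>cj)
  qed
  then show ?thesis using etaeq by blast
qed

end

theorem mainTheorem10:
  fixes m :: "'a::countable \<Rightarrow> 'a \<Rightarrow> 'a" and st :: "'a \<Rightarrow> 'a" and one z :: 'a
  assumes "boolean_inverse_monoid m st one z"
    and "condition_H m z"
  shows "(\<forall>\<nu>\<in>IM m st z. eta m st z \<nu> \<in> inv_means m st one z)
    \<and> bij_betw (eta m st z) (IM m st z) (inv_means m st one z)
    \<and> (\<forall>\<nu>1\<in>IM m st z. \<forall>\<nu>2\<in>IM m st z. \<forall>\<nu>\<in>IM m st z. \<forall>t::real.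
         0 \<le> t \<and> t \<le> 1 \<and>
         (\<forall>A\<in>sets \<nu>. measure \<nu> A = t * measure \<nu>1 A + (1 - t) * measure \<nu>2 A) \<longrightarrow>
         eta m st z \<nu> = (\<lambda>e. t * eta m st z \<nu>1 e + (1 - t) * eta m st z \<nu>2 e))"
proof -
  interpret BIM m st one z by unfold_locales (rule assms(1))
  have 1: "\<forall>\<nu>\<in>IM m st z. eta m st z \<nu> \<in> inv_means m st one z" using forward by blast
  have "eta m st z ` IM m st z = inv_means m st one z"
  proof
    show "eta m st z ` IM m st z \<subseteq> inv_means m st one z" using 1 by blast
    show "inv_means m st one z \<subseteq> eta m st z ` IM m st z"
    proof
      fix \<mu> assume "\<mu> \<in> inv_means m st one z"
      then obtain \<nu> where "\<nu> \<in> IM m st z" "eta m st z \<nu> = \<mu>" using construct by blast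
      then show "\<mu> \<in> eta m st z ` IM m st z" by blast
    qed
  qed
  then have 2: "bij_betw (eta m st z) (IM m st z) (inv_means m st one z)"
    unfolding bij_betw_def using inj_eta by simp
  have 3: "\<forall>\<nu>1\<in>IM m st z. \<forall>\<nu>2\<in>IM m st z. \<forall>\<nu>\<in>IM m st z. \<forall>t::real.
         0 \<le> t \<and> t \<le> 1 \<and>
         (\<forall>A\<in>sets \<nu>. measure \<nu> A = t * measure \<nu>1 A + (1 - t) * measure \<nu>2 A) \<longrightarrow>
         eta m st z \<nu> = (\<lambda>e. t * eta m st z \<nu>1 e + (1 - t) * eta m st z \<nu>2 e)"
    using affine by blast
  show ?thesis using 1 2 3 by blast
qed



end
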